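(* Let $K$ be a non-trivial torus knot and let $g$ be any non-trivial element of $G(K)$. Then there exists a constant $N_g>0$ such that $p_{1/n}(g)\ne1$ in $\pi_1(K(1/n))$ for all integers $n\ge N_g$.
   Context: $G(K)=\pi_1(E(K))$, where $E(K)$ is the exterior of $K$. With $(\mu,\lambda)$ a preferred meridian–longitude pair, $K(1/n)$ is the closed $3$-manifold obtained from $E(K)$ by attaching a solid torus with meridian glued to a curve representing $\mu\lambda^n$, and $p_{1/n}\colon G(K)\to\pi_1(K(1/n))$ is the induced epimorphism. *)

theory Defs
  imports Main
begin

text \<open>Words in a free group over generators of type 'a: a letter is (sign, generator),
  sign True = the generator, sign False = its inverse.\<close>

type_synonym 'a word = "(bool \<times> 'a) list"

definition inv_word :: "'a word \<Rightarrow> 'a word" where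
  "inv_word w = rev (map (\<lambda>(b, x). (\<not> b, x)) w)"

definition word_pow :: "'a word \<Rightarrow> int \<Rightarrow> 'a word" where
  "word_pow w n = (if 0 \<le> n then concat (replicate (nat n) w)
                   else concat (replicate (nat (- n)) (inv_word w)))"

inductive pres_eq :: "'a word set \<Rightarrow> 'a word \<Rightarrow> 'a word \<Rightarrow> bool" for R where
  refl: "pres_eq R w w"
| sym: "pres_eq R u v \<Longrightarrow> pres_eq R v u"
| trans: "pres_eq R u v \<Longrightarrow> pres_eq R v w \<Longrightarrow> pres_eq R u w"
| cancel: "pres_eq R (u @ [(b, x), (\<not> b, x)] @ v) (u @ v)"
| relator: "r \<in> R \<Longrightarrow> pres_eq R (u @ r @ v) (u @ v)"

definition trivial_in :: "'a word set \<Rightarrow> 'a word \<Rightarrow> bool" where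
  "trivial_in R w \<longleftrightarrow> pres_eq R w []"

text \<open>Torus knot T(p,q) group: generators x (= False) and y (= True), G = < x, y | x^p = y^q >.\<close>

definition gen_x :: "bool word" where "gen_x = [(True, False)]"
definition gen_y :: "bool word" where "gen_y = [(True, True)]"

definition torus_relators :: "int \<Rightarrow> int \<Rightarrow> bool word set" where
  "torus_relators p q = {word_pow gen_x p @ inv_word (word_pow gen_y q)}"

text \<open>Meridian: y^c x^d where p c + q d = 1 (well defined in G up to the relation,
  since x^p = y^q is central).\<close>
definition torus_meridian :: "int \<Rightarrow> int \<Rightarrow> bool word" where
  "torus_meridian p q = (let (c, d) = (SOME (c, d). p * c + q * d = 1)
                          in word_pow gen_y c @ word_pow gen_x d)"

definition torus_longitude :: "int \<Rightarrow> int \<Rightarrow> bool word" where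
  "torus_longitude p q = word_pow gen_x p @ word_pow (torus_meridian p q) (- (p * q))"

definition surgery_relators :: "int \<Rightarrow> int \<Rightarrow> int \<Rightarrow> bool word set" where
  "surgery_relators p q n = torus_relators p q \<union>
     {torus_meridian p q @ word_pow (torus_longitude p q) n}"

definition nontrivial_torus :: "int \<Rightarrow> int \<Rightarrow> bool" where
  "nontrivial_torus p q \<longleftrightarrow> coprime p q \<and> \<bar>p\<bar> \<ge> 2 \<and> \<bar>q\<bar> \<ge> 2"

end

theory Submission
  imports Defs "HOL-Analysis.Analysis" "HOL-Computational_Algebra.Polynomial"
begin


section \<open>Generic evaluation of words\<close>

locale wgrp =
  fixes mul :: "'b \<Rightarrow> 'b \<Rightarrow> 'b" and e :: 'b and gen :: "bool \<Rightarrow> 'a \<Rightarrow> 'b"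
  assumes assoc: "mul (mul a1 a2) a3 = mul a1 (mul a2 a3)"
    and lunit: "mul e a = a" and runit: "mul a e = a"
    and ginv: "mul (gen bb v) (gen (\<not> bb) v) = e"
begin

fun ev :: "'a word \<Rightarrow> 'b" where
  "ev [] = e"
| "ev (l # w) = mul (gen (fst l) (snd l)) (ev w)"

lemma ev_append: "ev (u @ v) = mul (ev u) (ev v)"
  by (induction u) (auto simp: lunit assoc)

lemma ev_cancel: "ev (u @ [(b, x), (\<not> b, x)] @ v) = ev (u @ v)"
proof -
  have "ev ([(b, x), (\<not> b, x)] @ v) = ev v"
    by (simp add: ginv assoc[symmetric] lunit)
  then show ?thesis by (simp add: ev_append)
qed

lemma ev_pres_eq:
  assumes "pres_eq R u v" and "\<And>r. r \<in> R \<Longrightarrow> ev r = e"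
  shows "ev u = ev v"
  using assms(1)
proof (induction rule: pres_eq.induct)
  case (cancel u b x v)
  then show ?case using ev_cancel by simp
next
  case (relator r u v)
  then show ?case using assms(2)[OF relator(1)] by (simp add: ev_append runit lunit)
qed auto

lemma ev_inv_word_r: "mul (ev w) (ev (inv_word w)) = e"
proof (induction w)
  case Nil then show ?case by (simp add: inv_word_def lunit)
next
  case (Cons l w)
  obtain b v where l: "l = (b, v)" by (cases l)
  have iw: "inv_word ((b,v) # w) = inv_word w @ [(\<not> b, v)]"
    by (simp add: inv_word_def)
  have "mul (ev (l # w)) (ev (inv_word (l # w)))
      = mul (gen b v) (mul (mul (ev w) (ev (inv_word w))) (gen (\<not> b) v))"
    unfolding l iw by (simp only: ev_append ev.simps fst_conv snd_conv runit assoc)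
  also have "\<dots> = e" using Cons by (simp add: lunit ginv)
  finally show ?case .
qed

lemma inv_word_inv_word[simp]: "inv_word (inv_word w) = w"
  by (induction w) (auto simp: inv_word_def)

lemma ev_inv_word_l: "mul (ev (inv_word w)) (ev w) = e"
  using ev_inv_word_r[of "inv_word w"] by simp

end

lemma pres_eq_cong: "pres_eq R u v \<Longrightarrow> pres_eq R (a @ u @ b) (a @ v @ b)"
proof (induction rule: pres_eq.induct)
  case (refl w) then show ?case by (rule pres_eq.refl)
next
  case (sym u v) then show ?case by (blast intro: pres_eq.sym)
next
  case (trans u v w) then show ?case by (metis pres_eq.trans)
next
  case (cancel u bb x v)
  have "pres_eq R ((a @ u) @ [(bb, x), (\<not> bb, x)] @ (v @ b)) ((a @ u) @ (v @ b))"
    by (rule pres_eq.cancel)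
  then show ?case by simp
next
  case (relator r u v)
  have "pres_eq R ((a @ u) @ r @ (v @ b)) ((a @ u) @ (v @ b))"
    by (rule pres_eq.relator[OF relator])
  then show ?case by simp
qed

lemma pres_eq_congL: "pres_eq R u v \<Longrightarrow> pres_eq R (a @ u) (a @ v)"
  using pres_eq_cong[of R u v a "[]"] by simp

lemma pres_eq_congR: "pres_eq R u v \<Longrightarrow> pres_eq R (u @ b) (v @ b)"
  using pres_eq_cong[of R u v "[]" b] by simp

lemma pres_eq_app: "pres_eq R u v \<Longrightarrow> pres_eq R u' v' \<Longrightarrow> pres_eq R (u @ u') (v @ v')"
  by (meson pres_eq.trans pres_eq_congL pres_eq_congR)

lemma pres_eq_cancel2: "pres_eq R ([(b, x), (\<not> b, x)]) []"
  using pres_eq.cancel[of R "[]" b x "[]"] by simp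

lemma pres_eq_cancel3: "pres_eq R ([(\<not> b, x), (b, x)]) []"
  using pres_eq.cancel[of R "[]" "\<not> b" x "[]"] by simp

lemma pres_eq_inv_r: "pres_eq R (w @ inv_word w) []"
proof (induction w)
  case Nil then show ?case by (simp add: inv_word_def pres_eq.refl)
next
  case (Cons l w)
  obtain b v where l: "l = (b, v)" by (cases l)
  have iw: "(l # w) @ inv_word (l # w) = [l] @ (w @ inv_word w) @ [(\<not> b, v)]"
    by (simp add: inv_word_def l)
  have "pres_eq R ([l] @ (w @ inv_word w) @ [(\<not> b, v)]) ([l] @ [] @ [(\<not> b, v)])"
    by (rule pres_eq_cong[OF Cons])
  moreover have "pres_eq R ([l] @ [] @ [(\<not> b, v)]) []"
    using pres_eq_cancel2 l by simp
  ultimately show ?case using iw pres_eq.trans by metis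
qed

lemma inv_word_inv_word'[simp]: "inv_word (inv_word w) = w"
  by (induction w) (auto simp: inv_word_def)

lemma pres_eq_inv_l: "pres_eq R (inv_word w @ w) []"
  using pres_eq_inv_r[of R "inv_word w"] by simp

lemma pres_eq_rel: "r \<in> R \<Longrightarrow> pres_eq R r []"
  using pres_eq.relator[of r R "[]" "[]"] by simp


lemma rep_snoc: "replicate n x @ [x] = replicate (Suc n) x"
  by (simp add: replicate_append_same)

lemma concat_rep_snoc: "concat (replicate n w) @ w = concat (replicate (Suc n) w)"
  by (induction n) auto

lemma cr1: "concat (replicate (Suc 0) w) = w" by simp

lemma concat_replicate_single: "concat (replicate n [l]) = replicate n l"
  by (induction n) auto

lemma inv_word_replicate: "inv_word (replicate n (b, v)) = replicate n (\<not> b, v)"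
  by (simp add: inv_word_def)

lemma inv_word_append: "inv_word (u @ v) = inv_word v @ inv_word u"
  by (simp add: inv_word_def)

lemma inv_word_concat_replicate: "inv_word (concat (replicate n w)) = concat (replicate n (inv_word w))"
proof (induction n)
  case (Suc n)
  have "inv_word (concat (replicate (Suc n) w)) = inv_word (concat (replicate n w)) @ inv_word w"
    by (simp add: inv_word_append)
  also have "\<dots> = concat (replicate n (inv_word w)) @ inv_word w" using Suc by simp
  also have "\<dots> = concat (replicate (Suc n) (inv_word w))" by (rule concat_rep_snoc)
  finally show ?case .
qed (simp add: inv_word_def)

lemma word_pow_single:
  "word_pow [(b, v)] k = (if 0 \<le> k then replicate (nat k) (b, v) else replicate (nat (-k)) (\<not> b, v))"
  by (simp add: word_pow_def concat_replicate_single inv_word_def)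

lemma pres_eq_inv_cong:
  assumes "pres_eq R u v" shows "pres_eq R (inv_word u) (inv_word v)"
proof -
  have "pres_eq R (inv_word u) (inv_word u @ v @ inv_word v)"
    using pres_eq_congL[OF pres_eq_inv_r[of R v], of "inv_word u"]
    by (auto intro: pres_eq.sym)
  moreover have "pres_eq R (inv_word u @ v @ inv_word v) (inv_word u @ u @ inv_word v)"
    using pres_eq_cong[OF pres_eq.sym[OF assms], of "inv_word u" "inv_word v"] by simp
  moreover have "pres_eq R (inv_word u @ u @ inv_word v) (inv_word v)"
    using pres_eq_congR[OF pres_eq_inv_l[of R u], of "inv_word v"] by simp
  ultimately show ?thesis by (meson pres_eq.trans)
qed

lemma rep_comm_same: "replicate n l @ [l] = [l] @ replicate n l"
  by (simp add: replicate_append_same)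

lemma rep_comm_flip: "pres_eq R (replicate n (b, v) @ [(\<not> b, v)]) ([(\<not> b, v)] @ replicate n (b, v))"
proof (cases n)
  case 0 then show ?thesis by (simp add: pres_eq.refl)
next
  case (Suc m)
  have a: "replicate n (b, v) @ [(\<not> b, v)] = replicate m (b, v) @ [(b, v), (\<not> b, v)] @ []"
    using Suc by (simp add: rep_snoc[symmetric] del: replicate_Suc)
  have b: "[(\<not> b, v)] @ replicate n (b, v) = [] @ [(\<not> b, v), (\<not>\<not> b, v)] @ replicate m (b, v)"
    using Suc by simp
  have "pres_eq R (replicate m (b, v) @ [(b, v), (\<not> b, v)] @ []) (replicate m (b, v) @ [])"
    by (rule pres_eq.cancel)
  moreover have "pres_eq R ([] @ [(\<not> b, v), (\<not>\<not> b, v)] @ replicate m (b, v)) ([] @ replicate m (b, v))"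
    by (rule pres_eq.cancel)
  ultimately show ?thesis unfolding a b by (auto intro: pres_eq.sym pres_eq.trans)
qed

lemma rep_comm_letter:
  assumes "snd l = v"
  shows "pres_eq R (replicate n (b, v) @ [l]) ([l] @ replicate n (b, v))"
proof -
  obtain b' where l: "l = (b', v)" using assms by (cases l) auto
  show ?thesis
  proof (cases "b' = b")
    case True then show ?thesis using l by (simp add: rep_comm_same pres_eq.refl)
  next
    case False then have "b' = (\<not> b)" by auto
    then show ?thesis using l rep_comm_flip by simp
  qed
qed

lemma word_pow_single_comm:
  assumes "snd l = v"
  shows "pres_eq R (word_pow [(b, v)] k @ [l]) ([l] @ word_pow [(b, v)] k)"
  using rep_comm_letter[OF assms] by (simp add: word_pow_single)

definition zw :: "int \<Rightarrow> bool word" where "zw p = word_pow gen_x p"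
definition zpow :: "int \<Rightarrow> int \<Rightarrow> bool word" where "zpow p k = word_pow (zw p) k"
definition blk :: "bool \<times> nat \<Rightarrow> bool word" where "blk b = replicate (snd b) (True, fst b)"
definition nfw :: "int \<Rightarrow> int \<Rightarrow> (bool \<times> nat) list \<Rightarrow> bool word" where
  "nfw p k B = zpow p k @ concat (map blk B)"

fun alt :: "(bool \<times> nat) list \<Rightarrow> bool" where
  "alt [] = True"
| "alt [a] = True"
| "alt (a # b # r) = (fst a \<noteq> fst b \<and> alt (b # r))"

lemma alt_snoc: "alt (B @ [x]) \<longleftrightarrow> alt B \<and> (B \<noteq> [] \<longrightarrow> fst (last B) \<noteq> fst x)"
  by (induction B rule: alt.induct) auto

lemma alt_butlast: "alt B \<Longrightarrow> alt (butlast B)"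
proof (induction B rule: alt.induct)
  case (3 a b r)
  then show ?case by (cases r) auto
qed auto

definition NN :: "int \<Rightarrow> int \<Rightarrow> bool \<Rightarrow> nat" where
  "NN p q v = (if v then nat \<bar>q\<bar> else nat \<bar>p\<bar>)"
definition SS :: "int \<Rightarrow> int \<Rightarrow> bool \<Rightarrow> int" where
  "SS p q v = (if v then sgn q else sgn p)"

definition valid :: "int \<Rightarrow> int \<Rightarrow> (bool \<times> nat) list \<Rightarrow> bool" where
  "valid p q B \<longleftrightarrow> alt B \<and> (\<forall>x\<in>set B. 0 < snd x \<and> snd x < NN p q (fst x))"

locale tor =
  fixes p q :: int
  assumes nt: "nontrivial_torus p q"
begin

abbreviation eqv where "eqv \<equiv> pres_eq (torus_relators p q)"

lemma p2: "nat \<bar>p\<bar> \<ge> 2" and q2: "nat \<bar>q\<bar> \<ge> 2"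
  using nt unfolding nontrivial_torus_def by auto

lemma zw_yq: "eqv (zw p) (word_pow gen_y q)"
proof -
  let ?r = "zw p @ inv_word (word_pow gen_y q)"
  have r: "eqv ?r []"
    by (rule pres_eq_rel) (simp add: torus_relators_def zw_def)
  have "eqv (zw p) (?r @ word_pow gen_y q)"
    using pres_eq_congL[OF pres_eq_inv_l[of "torus_relators p q" "word_pow gen_y q"], where a="zw p"]
    by (auto intro: pres_eq.sym)
  moreover have "eqv (?r @ word_pow gen_y q) ([] @ word_pow gen_y q)"
    by (rule pres_eq_congR[OF r])
  ultimately show ?thesis by (auto intro: pres_eq.trans)
qed

lemma zw_comm_letter: "eqv (zw p @ [l]) ([l] @ zw p)"
proof (cases "snd l")
  case False
  then show ?thesis unfolding zw_def gen_x_def by (intro word_pow_single_comm) auto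
next
  case True
  have "eqv (word_pow gen_y q @ [l]) ([l] @ word_pow gen_y q)"
    unfolding gen_y_def by (rule word_pow_single_comm) (use True in auto)
  then show ?thesis using zw_yq
    by (meson pres_eq.sym pres_eq.trans pres_eq_congL pres_eq_congR)
qed

lemma zw_comm: "eqv (zw p @ w) (w @ zw p)"
proof (induction w)
  case Nil then show ?case by (simp add: pres_eq.refl)
next
  case (Cons l w)
  have "eqv (zw p @ [l] @ w) ([l] @ zw p @ w)"
    using pres_eq_congR[OF zw_comm_letter[of l], of w] by simp
  moreover have "eqv ([l] @ zw p @ w) ([l] @ w @ zw p)"
    using pres_eq_congL[OF Cons, of "[l]"] by simp
  ultimately show ?case by (auto intro: pres_eq.trans)
qed

lemma zwi_comm: "eqv (inv_word (zw p) @ w) (w @ inv_word (zw p))"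
proof -
  let ?z = "zw p" and ?i = "inv_word (zw p)"
  have "eqv (?i @ w) (?i @ w @ ?z @ ?i)"
    using pres_eq_congL[OF pres_eq_inv_r[of "torus_relators p q" ?z], where a="?i @ w"] by (auto intro: pres_eq.sym)
  moreover have "eqv (?i @ (w @ ?z) @ ?i) (?i @ (?z @ w) @ ?i)"
    by (rule pres_eq_cong[OF pres_eq.sym[OF zw_comm]])
  moreover have "eqv ((?i @ ?z) @ (w @ ?i)) ([] @ (w @ ?i))"
    by (rule pres_eq_congR[OF pres_eq_inv_l])
  ultimately show ?thesis by (auto intro: pres_eq.trans)
qed

lemma concat_rep_comm:
  assumes "\<And>w. eqv (z @ w) (w @ z)"
  shows "eqv (concat (replicate n z) @ w) (w @ concat (replicate n z))"
proof (induction n)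
  case 0 then show ?case by (simp add: pres_eq.refl)
next
  case (Suc n)
  have "eqv (z @ concat (replicate n z) @ w) (z @ w @ concat (replicate n z))"
    by (rule pres_eq_congL[OF Suc])
  moreover have "eqv ((z @ w) @ concat (replicate n z)) ((w @ z) @ concat (replicate n z))"
    by (rule pres_eq_congR[OF assms])
  ultimately show ?case by (auto intro: pres_eq.trans)
qed

lemma zpow_comm: "eqv (zpow p k @ w) (w @ zpow p k)"
  unfolding zpow_def word_pow_def
  using concat_rep_comm[OF zw_comm] concat_rep_comm[OF zwi_comm] by auto

lemma zpow_succ: "eqv (zpow p k @ zw p) (zpow p (k + 1))"
proof (cases "0 \<le> k")
  case True
  have n: "nat (k+1) = Suc (nat k)" using True by simp
  have "zpow p k @ zw p = zpow p (k+1)"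
    using True by (simp add: zpow_def word_pow_def n concat_rep_snoc del: replicate_Suc)
  then show ?thesis by (simp add: pres_eq.refl)
next
  case False
  define m where "m = nat (- k - 1)"
  have k: "nat (-k) = Suc m" using False m_def by auto
  have k1: "zpow p (k+1) = concat (replicate m (inv_word (zw p)))"
    using False m_def by (simp add: zpow_def word_pow_def)
  have "zpow p k @ zw p = concat (replicate m (inv_word (zw p))) @ (inv_word (zw p) @ zw p)"
    using False by (simp add: zpow_def word_pow_def k concat_rep_snoc[symmetric] del: replicate_Suc)
  moreover have "eqv (concat (replicate m (inv_word (zw p))) @ (inv_word (zw p) @ zw p))
        (concat (replicate m (inv_word (zw p))) @ [])"
    by (rule pres_eq_congL[OF pres_eq_inv_l])
  ultimately show ?thesis using k1 by simp
qed

lemma zpow_pred: "eqv (zpow p k @ inv_word (zw p)) (zpow p (k - 1))"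
proof (cases "k \<le> 0")
  case True
  have n: "nat (1 - k) = Suc (nat (-k))" using True by simp
  have "zpow p k @ inv_word (zw p) = zpow p (k - 1)"
    using True by (cases "k = 0") (simp_all add: zpow_def word_pow_def n concat_rep_snoc cr1 del: replicate_Suc)
  then show ?thesis by (simp add: pres_eq.refl)
next
  case False
  define m where "m = nat (k - 1)"
  have k: "nat k = Suc m" using False m_def by auto
  have k1: "zpow p (k - 1) = concat (replicate m (zw p))"
    using False m_def by (simp add: zpow_def word_pow_def)
  have "zpow p k @ inv_word (zw p) = concat (replicate m (zw p)) @ (zw p @ inv_word (zw p))"
    using False by (simp add: zpow_def word_pow_def k concat_rep_snoc[symmetric] del: replicate_Suc)
  moreover have "eqv (concat (replicate m (zw p)) @ (zw p @ inv_word (zw p)))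
        (concat (replicate m (zw p)) @ [])"
    by (rule pres_eq_congL[OF pres_eq_inv_r])
  ultimately show ?thesis using k1 by simp
qed

lemma zpow_1: "zpow p 1 = zw p" and zpow_m1: "zpow p (-1) = inv_word (zw p)"
  by (simp_all add: zpow_def word_pow_def)

lemma zpow_add_sgn:
  assumes "s = 1 \<or> s = -1"
  shows "eqv (zpow p k @ zpow p s) (zpow p (k + s))"
  using assms zpow_succ zpow_pred zpow_1 zpow_m1 by auto

lemma rep_key: "eqv (replicate (NN p q v) (True, v)) (zpow p (SS p q v))"
proof (cases v)
  case False
  show ?thesis
  proof (cases "p > 0")
    case True
    then show ?thesis using False
      by (simp add: NN_def SS_def zpow_1 zw_def gen_x_def word_pow_single pres_eq.refl)
  next
    case n: False
    then have "p < 0" using p2 by auto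
    then show ?thesis using False
      by (simp add: NN_def SS_def zpow_m1 zw_def gen_x_def word_pow_single inv_word_replicate pres_eq.refl)
  qed
next
  case True
  have yz: "eqv (word_pow gen_y q) (zw p)" by (rule pres_eq.sym[OF zw_yq])
  show ?thesis
  proof (cases "q > 0")
    case qp: True
    have "replicate (NN p q v) (True, v) = word_pow gen_y q"
      using True qp by (simp add: NN_def gen_y_def word_pow_single)
    then show ?thesis using True qp yz by (simp add: SS_def zpow_1)
  next
    case n: False
    then have qn: "q < 0" using q2 by auto
    have "replicate (NN p q v) (True, v) = inv_word (word_pow gen_y q)"
      using True qn by (simp add: NN_def gen_y_def word_pow_single inv_word_replicate)
    then show ?thesis using True qn pres_eq_inv_cong[OF yz] by (simp add: SS_def zpow_m1)
  qed
qed

lemma SS_pm: "SS p q v = 1 \<or> SS p q v = -1"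
  using p2 q2 by (auto simp: SS_def sgn_if)

lemma NN2: "NN p q v \<ge> 2"
  using p2 q2 by (auto simp: NN_def)

lemma nfw_step:
  assumes "valid p q B"
  shows "\<exists>k' B'. valid p q B' \<and> eqv (nfw p k B @ [l]) (nfw p k' B')"
proof -
  obtain b v where l: "l = (b, v)" by (cases l)
  let ?N = "NN p q v" and ?s = "SS p q v"
  have N2: "?N \<ge> 2" by (rule NN2)
  have vB: "alt B" "\<And>x. x \<in> set B \<Longrightarrow> 0 < snd x \<and> snd x < NN p q (fst x)"
    using assms by (auto simp: valid_def)
  show ?thesis
  proof (cases "B \<noteq> [] \<and> fst (last B) = v")
    case True
    have e: "(v, snd (last B)) = last B" using True by (simp add: prod_eq_iff)
    have "B = butlast B @ [(v, snd (last B))]" unfolding e using True by simp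
    then obtain B0 i where B: "B = B0 @ [(v, i)]" by blast
    have vB0: "valid p q B0" using assms B alt_butlast[of B]
      by (auto simp: valid_def)
    have i: "0 < i" "i < ?N" using vB(2)[of "(v,i)"] B by auto
    have nfB: "nfw p k B = zpow p k @ concat (map blk B0) @ replicate i (True, v)"
      by (simp add: nfw_def B blk_def)
    show ?thesis
    proof (cases b)
      case bT: True
      show ?thesis
      proof (cases "Suc i < ?N")
        case True
        have "nfw p k B @ [l] = nfw p k (B0 @ [(v, Suc i)])"
          unfolding nfB using bT l by (simp add: nfw_def blk_def rep_snoc del: replicate_Suc)
        moreover have "valid p q (B0 @ [(v, Suc i)])"
          using assms True B by (auto simp: valid_def alt_snoc)
        ultimately show ?thesis by (metis pres_eq.refl)
      next
        case False
        then have iN: "Suc i = ?N" using i by auto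
        have "nfw p k B @ [l] = zpow p k @ concat (map blk B0) @ replicate ?N (True, v)"
          using bT l iN by (simp add: nfB rep_snoc del: replicate_Suc)
        moreover have "eqv (zpow p k @ concat (map blk B0) @ replicate ?N (True, v))
                            (zpow p k @ concat (map blk B0) @ zpow p ?s)"
          by (rule pres_eq_congL[OF pres_eq_congL[OF rep_key]])
        moreover have "eqv (zpow p k @ (concat (map blk B0) @ zpow p ?s))
                            (zpow p k @ (zpow p ?s @ concat (map blk B0)))"
          by (rule pres_eq_congL[OF pres_eq.sym[OF zpow_comm]])
        moreover have "eqv ((zpow p k @ zpow p ?s) @ concat (map blk B0))
                            (zpow p (k + ?s) @ concat (map blk B0))"
          by (rule pres_eq_congR[OF zpow_add_sgn[OF SS_pm]])
        ultimately have "eqv (nfw p k B @ [l]) (nfw p (k + ?s) B0)"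
          unfolding nfw_def by (auto intro: pres_eq.trans)
        then show ?thesis using vB0 by blast
      qed
    next
      case bF: False
      obtain m where im: "i = Suc m" using i by (cases i) auto
      have e1: "nfw p k B @ [l] = (zpow p k @ concat (map blk B0) @ replicate m (True, v)) @ [(True, v), (\<not> True, v)] @ []"
        using bF l by (simp add: nfB im rep_snoc[symmetric] del: replicate_Suc)
      have e2: "eqv (nfw p k B @ [l]) (zpow p k @ concat (map blk B0) @ replicate m (True, v))"
        unfolding e1 using pres_eq.cancel[of _ "zpow p k @ concat (map blk B0) @ replicate m (True, v)" True v "[]"]
        by simp
      show ?thesis
      proof (cases "m = 0")
        case True
        then have "eqv (nfw p k B @ [l]) (nfw p k B0)" using e2 by (simp add: nfw_def)
        then show ?thesis using vB0 by blast
      next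
        case False
        have "eqv (nfw p k B @ [l]) (nfw p k (B0 @ [(v, m)]))" using e2 by (simp add: nfw_def blk_def)
        moreover have "valid p q (B0 @ [(v, m)])"
          using assms False B i im by (auto simp: valid_def alt_snoc)
        ultimately show ?thesis by blast
      qed
    qed
  next
    case nlast: False
    show ?thesis
    proof (cases b)
      case True
      have "nfw p k B @ [l] = nfw p k (B @ [(v, 1)])"
        using True l by (simp add: nfw_def blk_def)
      moreover have "valid p q (B @ [(v, 1)])"
        using assms nlast N2 by (auto simp: valid_def alt_snoc)
      ultimately show ?thesis by (metis pres_eq.refl)
    next
      case False
      let ?w = "zpow p k @ concat (map blk B)"
      have r: "replicate ?N (True, v) = replicate (?N - 1) (True, v) @ [(True, v)]"
      proof -
        have "Suc (?N - 1) = ?N" using N2 by simp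
        then show ?thesis by (metis rep_snoc)
      qed
      have s2: "eqv (zpow p (- ?s) @ zpow p ?s) []"
        using zpow_add_sgn[of "?s" "- ?s"] SS_pm by (auto simp: zpow_def word_pow_def)
      have "eqv [l] (zpow p (- ?s) @ zpow p ?s @ [l])"
        using pres_eq_congR[OF s2, of "[l]"] by (auto intro: pres_eq.sym)
      moreover have "eqv (zpow p (- ?s) @ zpow p ?s @ [l]) (zpow p (- ?s) @ replicate ?N (True, v) @ [l])"
        by (rule pres_eq_cong[OF pres_eq.sym[OF rep_key]])
      moreover have "eqv ((zpow p (- ?s) @ replicate (?N - 1) (True, v)) @ [(True, v), (\<not> True, v)] @ [])
                         ((zpow p (- ?s) @ replicate (?N - 1) (True, v)) @ [])"
        by (rule pres_eq.cancel)
      ultimately have kl: "eqv [l] (zpow p (- ?s) @ replicate (?N - 1) (True, v))"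
        using False l r by (auto intro: pres_eq.trans)
      have "eqv (?w @ [l]) (?w @ zpow p (- ?s) @ replicate (?N - 1) (True, v))"
        by (rule pres_eq_congL[OF kl])
      moreover have "eqv (zpow p k @ (concat (map blk B) @ zpow p (- ?s)) @ replicate (?N - 1) (True, v))
                         (zpow p k @ (zpow p (- ?s) @ concat (map blk B)) @ replicate (?N - 1) (True, v))"
        by (rule pres_eq_cong[OF pres_eq.sym[OF zpow_comm]])
      moreover have "eqv ((zpow p k @ zpow p (- ?s)) @ (concat (map blk B) @ replicate (?N - 1) (True, v)))
                         (zpow p (k - ?s) @ (concat (map blk B) @ replicate (?N - 1) (True, v)))"
        using pres_eq_congR[OF zpow_add_sgn[of "- ?s" k]] SS_pm by auto
      ultimately have "eqv (nfw p k B @ [l]) (nfw p (k - ?s) (B @ [(v, ?N - 1)]))"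
        unfolding nfw_def by (auto simp: blk_def intro: pres_eq.trans)
      moreover have "valid p q (B @ [(v, ?N - 1)])"
        using assms nlast N2 by (auto simp: valid_def alt_snoc)
      ultimately show ?thesis by blast
    qed
  qed
qed

lemma nf_exists: "\<exists>k B. valid p q B \<and> eqv w (nfw p k B)"
proof (induction w rule: rev_induct)
  case Nil
  have "nfw p 0 [] = []" by (simp add: nfw_def zpow_def word_pow_def)
  moreover have "valid p q []" by (simp add: valid_def)
  ultimately show ?case by (metis pres_eq.refl)
next
  case (snoc l w)
  then obtain k B where kB: "valid p q B" "eqv w (nfw p k B)" by blast
  obtain k' B' where kB': "valid p q B'" "eqv (nfw p k B @ [l]) (nfw p k' B')"
    using nfw_step[OF kB(1)] by blast
  have "eqv (w @ [l]) (nfw p k B @ [l])" by (rule pres_eq_congR[OF kB(2)])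
  then show ?case using kB' by (blast intro: pres_eq.trans)
qed

end


datatype 'a m2 = M2 'a 'a 'a 'a

fun m2mul :: "'a::comm_ring_1 m2 \<Rightarrow> 'a m2 \<Rightarrow> 'a m2" where
  "m2mul (M2 a b c d) (M2 e f g h) = M2 (a*e+b*g) (a*f+b*h) (c*e+d*g) (c*f+d*h)"

definition m2id :: "'a::comm_ring_1 m2" where "m2id = M2 1 0 0 1"

fun m2det :: "'a::comm_ring_1 m2 \<Rightarrow> 'a" where "m2det (M2 a b c d) = a*d - b*c"

fun m2inv :: "'a::field m2 \<Rightarrow> 'a m2" where
  "m2inv (M2 a b c d) = M2 (d/(a*d-b*c)) (-b/(a*d-b*c)) (-c/(a*d-b*c)) (a/(a*d-b*c))"

definition rot :: "real \<Rightarrow> real m2" where "rot \<phi> = M2 (cos \<phi>) (- sin \<phi>) (sin \<phi>) (cos \<phi>)"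

fun act :: "real m2 \<Rightarrow> complex \<Rightarrow> complex" where
  "act (M2 a b c d) z = Complex (a * Re z + b * Im z) (c * Re z + d * Im z)"

lemma m2mul_assoc: "m2mul (m2mul A B) C = m2mul A (m2mul B C)"
  by (cases A; cases B; cases C) (simp add: algebra_simps)

lemma m2mul_id[simp]: "m2mul m2id A = A" "m2mul A m2id = A"
  by (cases A, simp add: m2id_def)+

lemma m2det_mul: "m2det (m2mul A B) = m2det A * m2det B"
  by (cases A; cases B) (simp add: algebra_simps)

lemma inv_aux: "x*(y/D) + z*(w/D) = (x*y + z*w)/(D::'a::field)" by (simp add: add_divide_distrib)
lemma inv_aux2: "(y/D)*x + (w/D)*z = (x*y + z*w)/(D::'a::field)" by (simp add: add_divide_distrib mult.commute)

lemma m2inv_r: "m2det A \<noteq> 0 \<Longrightarrow> m2mul A (m2inv A) = m2id"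
proof (cases A)
  case (M2 a b c d)
  assume h: "m2det A \<noteq> 0"
  have D: "a*d - b*c \<noteq> 0" using h M2 by simp
  have e: "a*(d/(a*d - b*c)) + b*(-c/(a*d - b*c)) = 1"
     "a*(-b/(a*d - b*c)) + b*(a/(a*d - b*c)) = 0"
     "c*(d/(a*d - b*c)) + d*(-c/(a*d - b*c)) = 0"
     "c*(-b/(a*d - b*c)) + d*(a/(a*d - b*c)) = 1"
    unfolding inv_aux using D by (simp_all add: algebra_simps)
  show ?thesis unfolding M2 m2inv.simps m2mul.simps e m2id_def ..
qed

lemma m2inv_l: "m2det A \<noteq> 0 \<Longrightarrow> m2mul (m2inv A) A = m2id"
proof (cases A)
  case (M2 a b c d)
  assume h: "m2det A \<noteq> 0"
  have D: "a*d - b*c \<noteq> 0" using h M2 by simp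
  have e: "(d/(a*d - b*c))*a + (-b/(a*d - b*c))*c = 1"
     "(d/(a*d - b*c))*b + (-b/(a*d - b*c))*d = 0"
     "(-c/(a*d - b*c))*a + (a/(a*d - b*c))*c = 0"
     "(-c/(a*d - b*c))*b + (a/(a*d - b*c))*d = 1"
    unfolding inv_aux2 using D by (simp_all add: algebra_simps)
  show ?thesis unfolding M2 m2inv.simps m2mul.simps e m2id_def ..
qed

lemma m2det_rot[simp]: "m2det (rot \<phi>) = 1"
  by (simp add: rot_def power2_eq_square[symmetric])

lemma rot_add: "m2mul (rot a) (rot b) = rot (a + b)"
  by (simp add: rot_def cos_add sin_add algebra_simps)

lemma rot_0: "rot 0 = m2id"
  by (simp add: rot_def m2id_def)

lemma act_mul: "act (m2mul M N) z = act M (act N z)"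
  by (cases M; cases N) (simp add: algebra_simps)

lemma act_id[simp]: "act m2id z = z"
  by (simp add: m2id_def complex_eq_iff)

lemma act_scale: "act M (complex_of_real r * z) = complex_of_real r * act M z"
  by (cases M) (simp add: complex_eq_iff algebra_simps)

lemma act_nz:
  assumes "m2det M \<noteq> 0" "z \<noteq> 0" shows "act M z \<noteq> 0"
proof
  assume h: "act M z = 0"
  obtain a b c d where M: "M = M2 a b c d" by (cases M)
  let ?x = "Re z" and ?y = "Im z"
  have e1: "a * ?x + b * ?y = 0" and e2: "c * ?x + d * ?y = 0"
    using h M by (simp_all add: complex_eq_iff)
  have "(a*d - b*c) * ?x = d * (a * ?x + b * ?y) - b * (c * ?x + d * ?y)" by (simp add: algebra_simps)
  then have x: "?x = 0" using e1 e2 assms(1) M by simp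
  have "(a*d - b*c) * ?y = a * (c * ?x + d * ?y) - c * (a * ?x + b * ?y)" by (simp add: algebra_simps)
  then have y: "?y = 0" using e1 e2 assms(1) M by simp
  from x y assms(2) show False by (simp add: complex_eq_iff)
qed

lemma act_rot: "act (rot \<phi>) z = cis \<phi> * z"
  by (simp add: rot_def complex_eq_iff algebra_simps)

definition lifts :: "real m2 \<Rightarrow> (real \<Rightarrow> real) \<Rightarrow> bool" where
  "lifts M F \<longleftrightarrow> continuous_on UNIV F \<and> (\<forall>\<theta>. cis (F \<theta>) = sgn (act M (cis \<theta>)))"

lemma sgn_pos_scale: "r > 0 \<Longrightarrow> sgn (complex_of_real r * z) = sgn z"
  by (simp add: sgn_mult sgn_of_real)

lemma lifts_comp:
  assumes "m2det N \<noteq> 0" "lifts M F" "lifts N G"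
  shows "lifts (m2mul M N) (F \<circ> G)"
  unfolding lifts_def
proof
  show "continuous_on UNIV (F \<circ> G)"
    using assms(2,3) unfolding lifts_def comp_def by (auto intro: continuous_on_compose2[where t=UNIV])
  show "\<forall>\<theta>. cis ((F \<circ> G) \<theta>) = sgn (act (m2mul M N) (cis \<theta>))"
  proof
    fix \<theta>
    let ?w = "act N (cis \<theta>)"
    have wnz: "?w \<noteq> 0" using act_nz[OF assms(1)] by simp
    have s: "sgn ?w = complex_of_real (1 / cmod ?w) * ?w"
      by (simp add: sgn_div_norm divide_inverse mult.commute scaleR_conv_of_real)
    have "cis ((F \<circ> G) \<theta>) = sgn (act M (cis (G \<theta>)))" using assms(2) unfolding lifts_def by simp
    also have "cis (G \<theta>) = sgn ?w" using assms(3) unfolding lifts_def by simp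
    also have "sgn (act M (sgn ?w)) = sgn (act M ?w)"
      unfolding s act_scale using wnz by (subst sgn_pos_scale) auto
    finally show "cis ((F \<circ> G) \<theta>) = sgn (act (m2mul M N) (cis \<theta>))" by (simp add: act_mul)
  qed
qed

lemma lifts_rot: "lifts (rot \<phi>) (\<lambda>\<theta>. \<theta> + \<phi>)"
  unfolding lifts_def
  by (auto simp: act_rot sgn_mult cis_mult add.commute intro!: continuous_intros)

lemma lifts_id: "lifts m2id (\<lambda>\<theta>. \<theta>)"
  unfolding lifts_def by (auto intro!: continuous_intros)

lemma lifts_shift: "lifts M F \<Longrightarrow> lifts M (\<lambda>\<theta>. F \<theta> + 2 * pi * of_int k)"
proof -
  assume "lifts M F"
  moreover have "cis (x + 2 * pi * of_int k) = cis x" for x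
    by (simp add: cis_mult[symmetric])
  ultimately show ?thesis unfolding lifts_def by (auto intro!: continuous_intros)
qed

lemma cis_eq_int: "cis a = cis b \<Longrightarrow> \<exists>k::int. a = b + 2 * pi * of_int k"
proof -
  assume "cis a = cis b"
  then have "cis (a - b) = 1" by (simp add: cis_divide[symmetric])
  then have "cos (a - b) = 1" by (metis Re_complex_of_real cis.sel(1) one_complex.sel(1))
  then have "\<exists>n::int. a - b = of_int n * 2 * pi" using cos_one_2pi_int by blast
  then obtain n :: int where "a - b = of_int n * 2 * pi" by blast
  then show ?thesis by (intro exI[of _ n]) (simp add: algebra_simps)
qed

lemma lifts_unique:
  assumes "lifts M F" "lifts M G"
  shows "\<exists>k::int. \<forall>\<theta>. F \<theta> = G \<theta> + 2 * pi * of_int k"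
proof -
  let ?h = "\<lambda>\<theta>. F \<theta> - G \<theta>"
  have ex: "\<exists>k::int. ?h \<theta> = 2 * pi * of_int k" for \<theta>
  proof -
    have "cis (F \<theta>) = cis (G \<theta>)" using assms unfolding lifts_def by simp
    then obtain k :: int where "F \<theta> = G \<theta> + 2 * pi * of_int k" using cis_eq_int by blast
    then show ?thesis by (intro exI[of _ k]) simp
  qed
  have cont: "continuous_on UNIV ?h"
    using assms unfolding lifts_def by (auto intro!: continuous_intros)
  have "?h constant_on UNIV"
  proof (rule continuous_discrete_range_constant[OF connected_UNIV cont])
    fix x :: real
    show "\<exists>e>0. \<forall>y. y \<in> UNIV \<and> ?h y \<noteq> ?h x \<longrightarrow> e \<le> norm (?h y - ?h x)"
    proof (intro exI[of _ "2 * pi"] conjI allI impI)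
      fix y assume "y \<in> UNIV \<and> ?h y \<noteq> ?h x"
      obtain k1 :: int where k1: "?h x = 2 * pi * of_int k1" using ex by blast
      obtain k2 :: int where k2: "?h y = 2 * pi * of_int k2" using ex by blast
      have "k1 \<noteq> k2" using \<open>y \<in> UNIV \<and> ?h y \<noteq> ?h x\<close> k1 k2 by auto
      then have "1 \<le> \<bar>of_int k2 - of_int k1 :: real\<bar>" by (metis of_int_1_le_iff of_int_abs of_int_diff zabs_less_one_iff not_le right_minus_eq)
      then have "2 * pi * 1 \<le> 2 * pi * \<bar>of_int k2 - of_int k1 :: real\<bar>"
        by (intro mult_left_mono) auto
      also have "\<dots> = norm (?h y - ?h x)"
      proof -
        have "?h y - ?h x = (2*pi) * (of_int k2 - of_int k1)" unfolding k1 k2 by (simp add: algebra_simps)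
        then show ?thesis by (simp only: real_norm_def abs_mult) simp
      qed
      finally show "2 * pi \<le> norm (?h y - ?h x)" by simp
    qed simp
  qed
  then obtain c where c: "\<And>\<theta>. ?h \<theta> = c" unfolding constant_on_def by blast
  obtain k :: int where "?h 0 = 2 * pi * of_int k" using ex by blast
  then show ?thesis using c by (intro exI[of _ k]) (metis diff_eq_eq add.commute)
qed

section \<open>Explicit lifts\<close>

fun alpha :: "real m2 \<Rightarrow> complex" where
  "alpha (M2 a b c d) = Complex ((a + d) / 2) ((c - b) / 2)"
fun beta :: "real m2 \<Rightarrow> complex" where
  "beta (M2 a b c d) = Complex ((a - d) / 2) ((c + b) / 2)"

lemma act_ab: "act M z = alpha M * z + beta M * cnj z"
  by (cases M) (simp add: complex_eq_iff field_simps)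

lemma norm_ab: "(cmod (alpha M))\<^sup>2 - (cmod (beta M))\<^sup>2 = m2det M"
  by (cases M) (simp only: alpha.simps beta.simps cmod_power2 complex.sel m2det.simps, simp add: power2_eq_square field_simps)

lemma alpha_nz: "m2det M > 0 \<Longrightarrow> alpha M \<noteq> 0"
proof
  assume d: "m2det M > 0" and a: "alpha M = 0"
  have "- (cmod (beta M))\<^sup>2 = m2det M" using norm_ab[of M] a by simp
  moreover have "(cmod (beta M))\<^sup>2 \<ge> 0" by simp
  ultimately show False using d by linarith
qed

lemma ratio_lt1: "m2det M > 0 \<Longrightarrow> cmod (beta M / alpha M) < 1"
proof -
  assume d: "m2det M > 0"
  have "(cmod (beta M))\<^sup>2 < (cmod (alpha M))\<^sup>2" using norm_ab[of M] d by linarith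
  then have "cmod (beta M) < cmod (alpha M)" by (simp add: power2_less_imp_less)
  then show ?thesis using alpha_nz[OF d] by (simp add: norm_divide divide_less_eq)
qed

definition Lf :: "real m2 \<Rightarrow> real \<Rightarrow> real" where
  "Lf M \<theta> = \<theta> + Arg (alpha M) + Arg (1 + (beta M / alpha M) * cis (-2 * \<theta>))"

lemma Re_one_plus: "cmod w < 1 \<Longrightarrow> Re (1 + w) > 0"
  using abs_Re_le_cmod[of w] by simp

lemma one_plus_notin: "cmod w < 1 \<Longrightarrow> 1 + w \<notin> \<real>\<^sub>\<le>\<^sub>0"
  using Re_one_plus[of w] by (auto simp: complex_nonpos_Reals_iff)

lemma norm_w: "cmod (k * cis x) = cmod k"
  by (simp add: norm_mult)

lemma cont_Arg_comp:
  assumes k1: "cmod k < 1"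
  shows "continuous_on UNIV (\<lambda>\<theta>. Arg (1 + k * cis (-2 * \<theta>)))"
  unfolding continuous_on_eq_continuous_at[OF open_UNIV]
proof (intro ballI)
  fix \<theta> :: real
  have "continuous (at \<theta>) (\<lambda>\<theta>. 1 + k * cis (-2 * \<theta>))"
    unfolding continuous_at by (intro tendsto_intros)
  moreover have "continuous (at (1 + k * cis (-2 * \<theta>))) Arg"
    by (rule continuous_at_Arg[OF one_plus_notin]) (simp add: norm_mult k1)
  ultimately show "continuous (at \<theta>) (\<lambda>\<theta>. Arg (1 + k * cis (-2 * \<theta>)))"
    using continuous_at_compose[of \<theta> "\<lambda>\<theta>. 1 + k * cis (-2 * \<theta>)" Arg] by (simp add: comp_def)
qed

lemma lifts_Lf:
  assumes d: "m2det M > 0"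
  shows "lifts M (Lf M)"
  unfolding lifts_def
proof
  let ?k = "beta M / alpha M"
  have k1: "cmod ?k < 1" by (rule ratio_lt1[OF d])
  have anz: "alpha M \<noteq> 0" by (rule alpha_nz[OF d])
  show "continuous_on UNIV (Lf M)"
    unfolding Lf_def[abs_def] by (intro continuous_intros cont_Arg_comp[OF k1])
  show "\<forall>\<theta>. cis (Lf M \<theta>) = sgn (act M (cis \<theta>))"
  proof
    fix \<theta>
    let ?u = "1 + ?k * cis (-2 * \<theta>)"
    have "cmod (?k * cis (-2 * \<theta>)) < 1" using k1 by (simp add: norm_mult norm_divide)
    then have "Re ?u > 0" by (rule Re_one_plus)
    then have unz: "?u \<noteq> 0" by (metis zero_complex.sel(1) order_less_irrefl)
    have c: "cis \<theta> * cis (-2 * \<theta>) = cis (-\<theta>)" by (simp add: cis_mult)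
    have e: "act M (cis \<theta>) = cis \<theta> * alpha M * ?u"
    proof -
      have "cis \<theta> * alpha M * ?u = alpha M * cis \<theta> + beta M * (cis \<theta> * cis (-2 * \<theta>))"
        using anz by (simp add: field_simps)
      then show ?thesis unfolding c act_ab cis_cnj by simp
    qed
    have "cis (Lf M \<theta>) = cis \<theta> * cis (Arg (alpha M)) * cis (Arg ?u)"
      by (simp add: Lf_def cis_mult)
    also have "\<dots> = cis \<theta> * sgn (alpha M) * sgn ?u" using anz unz by (simp add: cis_Arg)
    also have "\<dots> = sgn (cis \<theta> * alpha M * ?u)" by (simp add: sgn_mult)
    finally show "cis (Lf M \<theta>) = sgn (act M (cis \<theta>))" using e by simp
  qed
qed

lemma cis_minus_2pi: "cis (x - 2 * pi) = cis x"
  by (simp add: cis_divide[symmetric])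

lemma Lf_per: "Lf M (\<theta> + pi) = Lf M \<theta> + pi"
proof -
  have e: "-2 * (\<theta> + pi) = (-2 * \<theta>) - 2 * pi" by (simp add: algebra_simps)
  have "cis (-2 * (\<theta> + pi)) = cis (-2 * \<theta>)"
    by (simp only: e cis_minus_2pi)
  then show ?thesis by (simp add: Lf_def)
qed

lemma Arg_one_plus_bound:
  assumes "cmod w < 1" shows "\<bar>Arg (1 + w)\<bar> < pi / 2"
proof -
  have "Arg (1 + w) = arctan (Im (1 + w) / Re (1 + w))"
    by (rule arg_conv_arctan[OF Re_one_plus[OF assms]])
  then show ?thesis using arctan_bounded[of "Im (1 + w) / Re (1 + w)"] by auto
qed

lemma Arg_one_plus_bound4:
  assumes "cmod w \<le> 1/2" shows "\<bar>Arg (1 + w)\<bar> \<le> pi / 4"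
proof -
  have w1: "cmod w < 1" using assms by simp
  have A: "Arg (1 + w) = arctan (Im (1 + w) / Re (1 + w))"
    by (rule arg_conv_arctan[OF Re_one_plus[OF w1]])
  have re: "Re (1 + w) \<ge> 1/2" using abs_Re_le_cmod[of w] assms by simp
  have im: "\<bar>Im (1 + w)\<bar> \<le> 1/2" using abs_Im_le_cmod[of w] assms by simp
  define y where "y = Im (1 + w) / Re (1 + w)"
  have "\<bar>y\<bar> \<le> 1"
    using re im unfolding y_def by (simp add: abs_divide divide_le_eq_1)
  then have "-1 \<le> y" "y \<le> 1" by (simp_all add: abs_le_iff)
  then have "-1 \<le> Im (1 + w) / Re (1 + w)" "Im (1 + w) / Re (1 + w) \<le> 1" unfolding y_def .
  then have "arctan (-1) \<le> arctan (Im (1 + w) / Re (1 + w))" "arctan (Im (1 + w) / Re (1 + w)) \<le> arctan 1"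
    by (simp_all only: arctan_le_iff)
  then have "\<bar>arctan (Im (1 + w) / Re (1 + w))\<bar> \<le> arctan 1"
    by (simp add: arctan_minus abs_le_iff)
  then show ?thesis using A arctan_one by simp
qed

lemma Lf_bound:
  assumes d: "m2det M > 0"
  shows "\<bar>Lf M \<theta> - \<theta> - Arg (alpha M)\<bar> < pi / 2"
proof -
  have "cmod (beta M / alpha M * cis (-2 * \<theta>)) < 1" using ratio_lt1[OF d] by (simp add: norm_mult norm_divide)
  from Arg_one_plus_bound[OF this] show ?thesis by (simp add: Lf_def)
qed

lemma Lf_bound4:
  assumes d: "m2det M > 0" and s: "cmod (beta M / alpha M) \<le> 1/2"
  shows "\<bar>Lf M \<theta> - \<theta> - Arg (alpha M)\<bar> \<le> pi / 4"
proof -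
  have "cmod (beta M / alpha M * cis (-2 * \<theta>)) \<le> 1/2" using s by (simp add: norm_mult norm_divide)
  from Arg_one_plus_bound4[OF this] show ?thesis by (simp add: Lf_def)
qed

definition per :: "(real \<Rightarrow> real) \<Rightarrow> bool" where
  "per F \<longleftrightarrow> (\<forall>\<theta>. F (\<theta> + pi) = F \<theta> + pi)"

lemma per_nat: "per F \<Longrightarrow> F (\<theta> + real n * pi) = F \<theta> + real n * pi"
proof (induction n arbitrary: \<theta>)
  case 0 then show ?case by simp
next
  case (Suc n)
  have "F (\<theta> + real (Suc n) * pi) = F ((\<theta> + real n * pi) + pi)" by (simp add: algebra_simps)
  also have "\<dots> = F (\<theta> + real n * pi) + pi" using Suc.prems unfolding per_def by blast
  finally show ?case using Suc by (simp add: algebra_simps)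
qed

lemma per_int: "per F \<Longrightarrow> F (\<theta> + of_int k * pi) = F \<theta> + of_int k * pi"
proof (cases "k \<ge> 0")
  case True
  assume "per F"
  then show ?thesis using per_nat[of F \<theta> "nat k"] True by simp
next
  case False
  assume p: "per F"
  have "F ((\<theta> + of_int k * pi) + real (nat (-k)) * pi) = F (\<theta> + of_int k * pi) + real (nat (-k)) * pi"
    by (rule per_nat[OF p])
  moreover have "(\<theta> + of_int k * pi) + real (nat (-k)) * pi = \<theta>" using False by simp
  ultimately show ?thesis using False by simp
qed

lemma per_Lf: "per (Lf M)"
  unfolding per_def by (simp add: Lf_per)

lemma per_shift: "per F \<Longrightarrow> per (\<lambda>\<theta>. F \<theta> + c)"
  unfolding per_def by simp

lemma lift_pair:
  assumes d: "m2det H > 0"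
  shows "\<exists>h hi. lifts H h \<and> lifts (m2inv H) hi \<and> (\<forall>\<theta>. h (hi \<theta>) = \<theta>) \<and> (\<forall>\<theta>. hi (h \<theta>) = \<theta>)
     \<and> per h \<and> per hi \<and> (\<forall>\<theta>. \<bar>h \<theta> - \<theta> - Arg (alpha H)\<bar> < pi / 2)"
proof -
  have dnz: "m2det H \<noteq> 0" using d by simp
  have di: "m2det (m2inv H) > 0"
  proof -
    have "m2det H * m2det (m2inv H) = 1" using m2det_mul[of H "m2inv H"] m2inv_r[OF dnz] by (simp add: m2id_def)
    then show ?thesis using d by (metis zero_less_mult_pos zero_less_one)
  qed
  let ?h = "Lf H" and ?g = "Lf (m2inv H)"
  have lh: "lifts H ?h" by (rule lifts_Lf[OF d])
  have lg: "lifts (m2inv H) ?g" by (rule lifts_Lf[OF di])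
  have "lifts m2id (?h \<circ> ?g)"
    using lifts_comp[OF _ lh lg] di m2inv_r[OF dnz] by simp
  then obtain k :: int where k: "\<And>\<theta>. (?h \<circ> ?g) \<theta> = \<theta> + 2 * pi * of_int k"
    using lifts_unique[OF _ lifts_id] by blast
  define hi where "hi = (\<lambda>\<theta>. ?g \<theta> + 2 * pi * of_int (-k))"
  have lhi: "lifts (m2inv H) hi" unfolding hi_def by (rule lifts_shift[OF lg])
  have phi: "per hi" unfolding hi_def by (rule per_shift[OF per_Lf])
  have inv1: "?h (hi \<theta>) = \<theta>" for \<theta>
  proof -
    have "?h (hi \<theta>) = ?h (?g \<theta> + of_int (-2 * k) * pi)" by (simp add: hi_def algebra_simps)
    also have "\<dots> = ?h (?g \<theta>) + of_int (-2 * k) * pi" by (rule per_int[OF per_Lf])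
    also have "\<dots> = \<theta>" using k[of \<theta>] by simp
    finally show ?thesis .
  qed
  have "lifts m2id (hi \<circ> ?h)"
    using lifts_comp[OF _ lhi lh] dnz m2inv_l[OF dnz] by simp
  then obtain j :: int where j: "\<And>\<theta>. (hi \<circ> ?h) \<theta> = \<theta> + 2 * pi * of_int j"
    using lifts_unique[OF _ lifts_id] by blast
  have "j = 0"
  proof -
    have "?h 0 = ?h (hi (?h 0))" using inv1 by simp
    also have "\<dots> = ?h (0 + of_int (2 * j) * pi)" using j[of 0] by (simp add: algebra_simps)
    also have "\<dots> = ?h 0 + of_int (2 * j) * pi" by (rule per_int[OF per_Lf])
    finally show ?thesis by simp
  qed
  then have inv2: "hi (?h \<theta>) = \<theta>" for \<theta> using j[of \<theta>] by simp
  show ?thesis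
    using lh lhi inv1 inv2 per_Lf phi Lf_bound[OF d] by blast
qed


lemma elliptic_MH:
  assumes det: "a*d - b*c = (1::real)" and tr: "a + d = 2 * cos \<psi>" and s: "sin \<psi> \<noteq> 0"
  shows "m2mul (M2 a b c d) (M2 1 ((a - cos \<psi>)/sin \<psi>) 0 (c / sin \<psi>))
       = m2mul (M2 1 ((a - cos \<psi>)/sin \<psi>) 0 (c / sin \<psi>)) (rot \<psi>)"
proof -
  have dd: "d = 2 * cos \<psi> - a" using tr by simp
  have bc: "b * c = a * d - 1" using det by simp
  have sc: "(sin \<psi>)\<^sup>2 = 1 - (cos \<psi>)\<^sup>2" by (simp add: sin_squared_eq)
  have e1: "cos \<psi> + (a - cos \<psi>) / sin \<psi> * sin \<psi> = a" using s by simp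
  have e2: "a * ((a - cos \<psi>) / sin \<psi>) + b * (c / sin \<psi>) = - sin \<psi> + (a - cos \<psi>) / sin \<psi> * cos \<psi>"
  proof -
    have "a * (a - cos \<psi>) + b * c = - (sin \<psi>)\<^sup>2 + (a - cos \<psi>) * cos \<psi>"
      unfolding bc sc dd by (simp add: algebra_simps power2_eq_square)
    then show ?thesis using s by (simp add: field_simps power2_eq_square)
  qed
  have e3: "c * ((a - cos \<psi>) / sin \<psi>) + d * (c / sin \<psi>) = c / sin \<psi> * cos \<psi>"
  proof -
    have "c * (a - cos \<psi>) + d * c = c * cos \<psi>" unfolding dd by (simp add: algebra_simps)
    then show ?thesis using s by (simp add: field_simps)
  qed
  show ?thesis using e1 e2 e3 s by (simp add: rot_def)
qed

lemma elliptic_conj: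
  assumes lF: "lifts (M2 a b c d) F" and det: "a*d - b*c = 1" and tr: "a + d = 2 * cos \<psi>"
    and s: "sin \<psi> \<noteq> 0" and cs: "c / sin \<psi> > 0" and near: "\<bar>F \<theta>0 - \<theta>0 - \<psi>\<bar> < pi"
  shows "\<exists>h hi. (\<forall>\<theta>. h (hi \<theta>) = \<theta>) \<and> (\<forall>\<theta>. hi (h \<theta>) = \<theta>) \<and> per h \<and> per hi
             \<and> (\<forall>\<theta>. F \<theta> = h (hi \<theta> + \<psi>))"
proof -
  define H where "H = M2 1 ((a - cos \<psi>)/sin \<psi>) 0 (c / sin \<psi>)"
  have dH: "m2det H > 0" using cs by (simp add: H_def)
  have dHnz: "m2det H \<noteq> 0" using dH by simp
  have MH: "m2mul (M2 a b c d) H = m2mul H (rot \<psi>)"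
    unfolding H_def by (rule elliptic_MH[OF det tr s])
  have M: "M2 a b c d = m2mul (m2mul H (rot \<psi>)) (m2inv H)"
  proof -
    have "M2 a b c d = m2mul (m2mul (M2 a b c d) H) (m2inv H)"
      by (simp add: m2mul_assoc m2inv_r[OF dHnz])
    then show ?thesis using MH by simp
  qed
  obtain h hi where hh: "lifts H h" "lifts (m2inv H) hi" "\<And>\<theta>. h (hi \<theta>) = \<theta>" "\<And>\<theta>. hi (h \<theta>) = \<theta>"
    "per h" "per hi" "\<And>\<theta>. \<bar>h \<theta> - \<theta> - Arg (alpha H)\<bar> < pi / 2"
    using lift_pair[OF dH] by blast
  have dinv: "m2det (m2inv H) \<noteq> 0"
  proof -
    have "m2det H * m2det (m2inv H) = 1" using m2det_mul[of H "m2inv H"] m2inv_r[OF dHnz] by (simp add: m2id_def)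
    then show ?thesis by auto
  qed
  have "lifts (m2mul (m2mul H (rot \<psi>)) (m2inv H)) ((h \<circ> (\<lambda>\<theta>. \<theta> + \<psi>)) \<circ> hi)"
    by (intro lifts_comp dinv hh lifts_rot) simp
  then have lG: "lifts (M2 a b c d) (\<lambda>\<theta>. h (hi \<theta> + \<psi>))" using M by (simp add: comp_def)
  obtain k :: int where k: "\<And>\<theta>. F \<theta> = h (hi \<theta> + \<psi>) + 2 * pi * of_int k"
    using lifts_unique[OF lF lG] by blast
  have Fk: "F \<theta> = h (hi \<theta> + \<psi> + of_int (2 * k) * pi)" for \<theta>
    using k[of \<theta>] per_int[OF hh(5), of "hi \<theta> + \<psi>" "2 * k"] by (simp add: algebra_simps)
  have "k = 0"
  proof -
    let ?u = "hi \<theta>0"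
    let ?A = "Arg (alpha H)"
    have t0: "\<theta>0 = h ?u" using hh(3) by simp
    have b1: "\<bar>h (?u + \<psi> + of_int (2 * k) * pi) - (?u + \<psi> + of_int (2 * k) * pi) - ?A\<bar> < pi / 2"
      by (rule hh(7))
    have b2: "\<bar>h ?u - ?u - ?A\<bar> < pi / 2" by (rule hh(7))
    have "\<bar>F \<theta>0 - \<theta>0 - \<psi> - of_int (2 * k) * pi\<bar> < pi"
      using b1 b2 Fk[of \<theta>0] t0 unfolding abs_less_iff by linarith
    then have "\<bar>of_int (2 * k) * pi\<bar> < 2 * pi" using near unfolding abs_less_iff by linarith
    then have "\<bar>of_int k\<bar> < (1::real)" by (simp add: abs_mult)
    then show ?thesis by linarith
  qed
  then show ?thesis using hh Fk by (intro exI[of _ h] exI[of _ hi]) simp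
qed

definition Dm :: "real \<Rightarrow> real m2" where "Dm t = M2 t 0 0 1"

lemma Dm_det: "m2det (Dm t) = t" by (simp add: Dm_def)

lemma Dm_mul_inv: "t \<noteq> 0 \<Longrightarrow> m2mul (Dm t) (Dm (1/t)) = m2id"
  by (simp add: Dm_def m2id_def)

lemma Dm_mul_inv': "t \<noteq> 0 \<Longrightarrow> m2mul (Dm (1/t)) (Dm t) = m2id"
  by (simp add: Dm_def m2id_def)

lemma Arg_pos_real: "r > 0 \<Longrightarrow> Arg (complex_of_real r) = 0"
  by (simp add: Arg_of_real)

lemma alpha_Dm: "alpha (Dm t) = complex_of_real ((t + 1) / 2)" by (simp add: Dm_def complex_eq_iff)
lemma beta_Dm: "beta (Dm t) = complex_of_real ((t - 1) / 2)" by (simp add: Dm_def complex_eq_iff)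

lemma ratio_Dm: "t > 0 \<Longrightarrow> beta (Dm t) / alpha (Dm t) = complex_of_real ((t - 1) / (t + 1))"
proof -
  assume t: "t > 0"
  have "((t - 1) / 2) / ((t + 1) / 2) = (t - 1) / (t + 1)" using t by (simp add: field_simps)
  then show ?thesis unfolding alpha_Dm beta_Dm of_real_divide[symmetric] by simp
qed

lemma Arg_alpha_Dm: "t > 0 \<Longrightarrow> Arg (alpha (Dm t)) = 0"
  unfolding alpha_Dm by (rule Arg_pos_real) simp

lemma Lf_Dm_0:
  assumes t: "t > 0" shows "Lf (Dm t) 0 = 0"
proof -
  have e: "1 + beta (Dm t) / alpha (Dm t) * cis (-2 * 0) = complex_of_real (1 + (t - 1) / (t + 1))"
    unfolding ratio_Dm[OF t] by (simp only: mult_zero_right cis_zero mult_1_right of_real_add of_real_1)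
  have pos: "1 + (t - 1) / (t + 1) > 0" using t by (simp add: field_simps)
  show ?thesis unfolding Lf_def e Arg_alpha_Dm[OF t] Arg_pos_real[OF pos] by simp
qed

lemma Dm_ratio:
  assumes "1 \<le> t" "t \<le> 3" shows "cmod (beta (Dm t) / alpha (Dm t)) \<le> 1/2"
proof -
  have "\<bar>(t - 1) / (t + 1)\<bar> \<le> 1/2" using assms by (simp add: abs_divide field_simps)
  moreover have "t > 0" using assms by simp
  ultimately show ?thesis unfolding ratio_Dm[OF \<open>t > 0\<close>] norm_of_real by simp
qed

definition fD :: "real \<Rightarrow> real \<Rightarrow> real" where "fD t = Lf (Dm t)"
definition fDi :: "real \<Rightarrow> real \<Rightarrow> real" where "fDi t = Lf (Dm (1/t))"

lemma fD_props:
  assumes t: "t > 0"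
  shows "lifts (Dm t) (fD t)" "lifts (Dm (1/t)) (fDi t)" "per (fD t)" "per (fDi t)"
    "\<And>\<theta>. fD t (fDi t \<theta>) = \<theta>" "\<And>\<theta>. fDi t (fD t \<theta>) = \<theta>" "fD t 0 = 0" "fDi t 0 = 0"
proof -
  show l1: "lifts (Dm t) (fD t)" unfolding fD_def by (rule lifts_Lf) (simp add: Dm_det t)
  show l2: "lifts (Dm (1/t)) (fDi t)" unfolding fDi_def by (rule lifts_Lf) (simp add: Dm_det t)
  show "per (fD t)" "per (fDi t)" unfolding fD_def fDi_def by (rule per_Lf)+
  show z1: "fD t 0 = 0" unfolding fD_def by (rule Lf_Dm_0[OF t])
  show z2: "fDi t 0 = 0" unfolding fDi_def by (rule Lf_Dm_0) (simp add: t)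
  have "lifts m2id (fD t \<circ> fDi t)"
    using lifts_comp[OF _ l1 l2] Dm_mul_inv[of t] t by (simp add: Dm_det)
  then obtain k :: int where k: "\<And>\<theta>. (fD t \<circ> fDi t) \<theta> = \<theta> + 2 * pi * of_int k"
    using lifts_unique[OF _ lifts_id] by blast
  have "k = 0" using k[of 0] z1 z2 by simp
  then show "\<And>\<theta>. fD t (fDi t \<theta>) = \<theta>" using k by simp
  have "lifts m2id (fDi t \<circ> fD t)"
    using lifts_comp[OF _ l2 l1] Dm_mul_inv'[of t] t by (simp add: Dm_det)
  then obtain j :: int where j: "\<And>\<theta>. (fDi t \<circ> fD t) \<theta> = \<theta> + 2 * pi * of_int j"
    using lifts_unique[OF _ lifts_id] by blast
  have "j = 0" using j[of 0] z1 z2 by simp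
  then show "\<And>\<theta>. fDi t (fD t \<theta>) = \<theta>" using j by simp
qed

lemma fD_bound:
  assumes "1 \<le> t" "t \<le> 3" shows "\<bar>fD t \<theta> - \<theta>\<bar> \<le> pi / 4"
  using Lf_bound4[of "Dm t" \<theta>] Dm_ratio[OF assms] Arg_alpha_Dm[of t] assms
  unfolding fD_def by (simp add: Dm_det)


context wgrp
begin

lemma ev_single: "ev [l] = gen (fst l) (snd l)"
  by (simp add: runit)

lemma ev_concat_rep:
  fixes C :: "real \<Rightarrow> 'b"
  assumes C: "\<And>a b. mul (C a) (C b) = C (a + b)" "C 0 = e" and u: "ev u = C s"
  shows "ev (concat (replicate n u)) = C (real n * s)"
proof (induction n)
  case 0 then show ?case using C by simp
next
  case (Suc n)
  have "ev (concat (replicate (Suc n) u)) = mul (ev u) (ev (concat (replicate n u)))"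
    by (simp add: ev_append)
  also have "\<dots> = C (s + real n * s)" using Suc u C by simp
  finally show ?case by (simp add: algebra_simps)
qed

lemma ev_inv_hom:
  fixes C :: "real \<Rightarrow> 'b"
  assumes C: "\<And>a b. mul (C a) (C b) = C (a + b)" "C 0 = e" and u: "ev u = C s"
  shows "ev (inv_word u) = C (- s)"
proof -
  have "ev (inv_word u) = mul (mul (C (- s)) (C s)) (ev (inv_word u))"
    using C by (simp add: lunit)
  also have "\<dots> = mul (C (- s)) (mul (ev u) (ev (inv_word u)))" using u by (simp add: assoc)
  also have "\<dots> = C (- s)" by (simp add: ev_inv_word_r runit)
  finally show ?thesis .
qed

lemma ev_word_pow_hom:
  fixes C :: "real \<Rightarrow> 'b"
  assumes C: "\<And>a b. mul (C a) (C b) = C (a + b)" "C 0 = e" and u: "ev u = C s"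
  shows "ev (word_pow u k) = C (of_int k * s)"
proof (cases "0 \<le> k")
  case True
  then show ?thesis using ev_concat_rep[where C=C, OF C u, of "nat k"] by (simp add: word_pow_def)
next
  case False
  have "ev (concat (replicate (nat (-k)) (inv_word u))) = C (real (nat (-k)) * (- s))"
    by (rule ev_concat_rep[where C=C, OF C ev_inv_hom[where C=C, OF C u]])
  then show ?thesis using False by (simp add: word_pow_def)
qed

end

definition T :: "real \<Rightarrow> real \<Rightarrow> real" where "T s = (\<lambda>\<theta>. \<theta> + s)"
definition Cf :: "real \<Rightarrow> real \<Rightarrow> real \<Rightarrow> real" where "Cf t s = (\<lambda>\<theta>. fD t (fDi t \<theta> + s))"
definition Ym :: "real \<Rightarrow> real \<Rightarrow> real m2" where "Ym t \<phi> = m2mul (m2mul (Dm t) (rot \<phi>)) (Dm (1/t))"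

lemma T_add: "T a \<circ> T b = T (a + b)" and T_0: "T 0 = id"
  by (auto simp: T_def fun_eq_iff)

lemma Cf_add: "t > 0 \<Longrightarrow> Cf t a \<circ> Cf t b = Cf t (a + b)"
  using fD_props(6) by (auto simp: Cf_def fun_eq_iff algebra_simps)

lemma Cf_0: "t > 0 \<Longrightarrow> Cf t 0 = id"
  using fD_props(5) by (auto simp: Cf_def fun_eq_iff)

lemma Ym_explicit: "t \<noteq> 0 \<Longrightarrow> Ym t \<phi> = M2 (cos \<phi>) (- t * sin \<phi>) (sin \<phi> / t) (cos \<phi>)"
  by (simp add: Ym_def Dm_def rot_def)

lemma Ym_add: "t \<noteq> 0 \<Longrightarrow> m2mul (Ym t a) (Ym t b) = Ym t (a + b)"
proof -
  assume t: "t \<noteq> 0"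
  have "m2mul (Ym t a) (Ym t b) = m2mul (m2mul (Dm t) (m2mul (rot a) (m2mul (m2mul (Dm (1/t)) (Dm t)) (rot b)))) (Dm (1/t))"
    by (simp add: Ym_def m2mul_assoc)
  also have "\<dots> = Ym t (a + b)" using t by (simp add: Dm_mul_inv' rot_add Ym_def)
  finally show ?thesis .
qed

lemma Ym_0: "t \<noteq> 0 \<Longrightarrow> Ym t 0 = m2id"
  by (simp add: Ym_def rot_0 Dm_mul_inv)

lemma Ym_det: "t \<noteq> 0 \<Longrightarrow> m2det (Ym t \<phi>) = 1"
  by (simp add: Ym_def m2det_mul Dm_det)

lemma lifts_T: "lifts (rot s) (T s)"
  unfolding T_def by (rule lifts_rot)

lemma lifts_Cf: "t > 0 \<Longrightarrow> lifts (Ym t s) (Cf t s)"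
proof -
  assume t: "t > 0"
  have "lifts (m2mul (m2mul (Dm t) (rot s)) (Dm (1/t))) ((fD t \<circ> T s) \<circ> fDi t)"
    using t by (intro lifts_comp fD_props lifts_T) (simp_all add: Dm_det)
  then show ?thesis by (simp add: Ym_def Cf_def T_def comp_def)
qed

definition genf :: "real \<Rightarrow> real \<Rightarrow> real \<Rightarrow> bool \<Rightarrow> bool \<Rightarrow> real \<Rightarrow> real" where
  "genf a1 a2 t b v = (if v then Cf t (if b then a2 else - a2) else T (if b then a1 else - a1))"
definition genm :: "real \<Rightarrow> real \<Rightarrow> real \<Rightarrow> bool \<Rightarrow> bool \<Rightarrow> real m2" where
  "genm a1 a2 t b v = (if v then Ym t (if b then a2 else - a2) else rot (if b then a1 else - a1))"

lemma wgrp_f: "t > 0 \<Longrightarrow> wgrp (\<circ>) id (genf a1 a2 t)"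
  by unfold_locales (auto simp: genf_def Cf_add Cf_0 T_add T_0)

lemma wgrp_m: "t > 0 \<Longrightarrow> wgrp m2mul m2id (genm a1 a2 t)"
  by unfold_locales (auto simp: genm_def Ym_add Ym_0 rot_add rot_0 m2mul_assoc)

definition evf where "evf a1 a2 t = wgrp.ev (\<circ>) id (genf a1 a2 t)"
definition evm where "evm a1 a2 t = wgrp.ev m2mul m2id (genm a1 a2 t)"

lemma evf_simps: "t > 0 \<Longrightarrow> evf a1 a2 t [] = id"
  "t > 0 \<Longrightarrow> evf a1 a2 t (l # w) = genf a1 a2 t (fst l) (snd l) \<circ> evf a1 a2 t w"
  by (simp_all add: evf_def wgrp.ev.simps[OF wgrp_f])

lemma evm_simps: "t > 0 \<Longrightarrow> evm a1 a2 t [] = m2id"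
  "t > 0 \<Longrightarrow> evm a1 a2 t (l # w) = m2mul (genm a1 a2 t (fst l) (snd l)) (evm a1 a2 t w)"
  by (simp_all add: evm_def wgrp.ev.simps[OF wgrp_m])

lemma lifts_ev:
  assumes t: "t > 0"
  shows "lifts (evm a1 a2 t w) (evf a1 a2 t w) \<and> m2det (evm a1 a2 t w) = 1"
proof (induction w)
  case Nil then show ?case using t lifts_id by (simp add: evm_simps evf_simps m2id_def id_def)
next
  case (Cons l w)
  have lg: "lifts (genm a1 a2 t b v) (genf a1 a2 t b v)" for b v
    using t by (auto simp: genm_def genf_def lifts_T lifts_Cf)
  have dg: "m2det (genm a1 a2 t b v) = 1" for b v
    using t by (auto simp: genm_def Ym_det)
  obtain b v where l: "l = (b, v)" by (cases l)
  have "lifts (m2mul (genm a1 a2 t b v) (evm a1 a2 t w)) (genf a1 a2 t b v \<circ> evf a1 a2 t w)"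
    using lifts_comp[OF _ lg] Cons by simp
  moreover have "m2det (m2mul (genm a1 a2 t b v) (evm a1 a2 t w)) = 1"
    using dg Cons by (simp add: m2det_mul)
  ultimately show ?case unfolding l evm_simps(2)[OF t] evf_simps(2)[OF t] fst_conv snd_conv by blast
qed

lemma evf_pow_x: assumes t: "t > 0" shows "evf a1 a2 t (word_pow gen_x k) = T (of_int k * a1)"
proof -
  interpret W: wgrp "(\<circ>)" id "genf a1 a2 t" by (rule wgrp_f[OF t])
  have "W.ev [(True, False)] = T a1" by (simp add: W.ev_single genf_def)
  then have "W.ev (word_pow [(True, False)] k) = T (of_int k * a1)"
    by (rule W.ev_word_pow_hom[where C = T, OF T_add T_0])
  then show ?thesis by (simp add: evf_def gen_x_def)
qed

lemma evf_pow_y: assumes t: "t > 0" shows "evf a1 a2 t (word_pow gen_y k) = Cf t (of_int k * a2)"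
proof -
  interpret W: wgrp "(\<circ>)" id "genf a1 a2 t" by (rule wgrp_f[OF t])
  have "W.ev [(True, True)] = Cf t a2" by (simp add: W.ev_single genf_def)
  then have "W.ev (word_pow [(True, True)] k) = Cf t (of_int k * a2)"
    by (rule W.ev_word_pow_hom[where C = "Cf t", OF Cf_add[OF t] Cf_0[OF t]])
  then show ?thesis by (simp add: evf_def gen_y_def)
qed

lemma evm_pow_x: assumes t: "t > 0" shows "evm a1 a2 t (word_pow gen_x k) = rot (of_int k * a1)"
proof -
  interpret W: wgrp m2mul m2id "genm a1 a2 t" by (rule wgrp_m[OF t])
  have "W.ev [(True, False)] = rot a1" by (simp add: W.ev_single genm_def)
  then have "W.ev (word_pow [(True, False)] k) = rot (of_int k * a1)"
    by (rule W.ev_word_pow_hom[where C = rot, OF rot_add rot_0])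
  then show ?thesis by (simp add: evm_def gen_x_def)
qed

lemma evm_pow_y: assumes t: "t > 0" shows "evm a1 a2 t (word_pow gen_y k) = Ym t (of_int k * a2)"
proof -
  have tn: "t \<noteq> 0" using t by simp
  interpret W: wgrp m2mul m2id "genm a1 a2 t" by (rule wgrp_m[OF t])
  have "W.ev [(True, True)] = Ym t a2" by (simp add: W.ev_single genm_def)
  then have "W.ev (word_pow [(True, True)] k) = Ym t (of_int k * a2)"
    by (rule W.ev_word_pow_hom[where C = "Ym t", OF Ym_add[OF tn] Ym_0[OF tn]])
  then show ?thesis by (simp add: evm_def gen_y_def)
qed


definition mcd :: "int \<Rightarrow> int \<Rightarrow> int \<times> int" where
  "mcd p q = (SOME (c, d). p * c + q * d = 1)"

lemma meridian_eq: "torus_meridian p q = word_pow gen_y (fst (mcd p q)) @ word_pow gen_x (snd (mcd p q))"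
  by (simp add: torus_meridian_def mcd_def split_beta Let_def)

lemma mcd_prop:
  assumes "coprime p q" shows "p * fst (mcd p q) + q * snd (mcd p q) = 1"
proof -
  obtain u v where "u * p + v * q = gcd p q" using bezout_int by blast
  then have "u * p + v * q = 1" using assms by (simp add: coprime_iff_gcd_eq_1)
  then have ex: "\<exists>x. (\<lambda>(c, d). p * c + q * d = 1) x" by (intro exI[of _ "(u, v)"]) (simp add: mult.commute)
  have "(\<lambda>(c, d). p * c + q * d = 1) (mcd p q)" unfolding mcd_def by (rule someI_ex[OF ex])
  then show ?thesis by (simp add: split_beta)
qed

lemma Cf_int_pi: "t > 0 \<Longrightarrow> Cf t (of_int m * pi) = T (of_int m * pi)"
  using per_int[OF fD_props(3)] fD_props(5) by (auto simp: Cf_def T_def fun_eq_iff)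

locale rep =
  fixes p q Z :: int and t a1 a2 :: real
  assumes t: "t > 0" and pa: "of_int p * a1 = of_int Z * pi" and qa: "of_int q * a2 = of_int Z * pi"
begin

interpretation W: wgrp "(\<circ>)" id "genf a1 a2 t" by (rule wgrp_f[OF t])

lemma evf_eq: "evf a1 a2 t = W.ev" by (simp add: evf_def)

lemma evf_append: "evf a1 a2 t (u @ v) = evf a1 a2 t u \<circ> evf a1 a2 t v"
  by (simp add: evf_eq W.ev_append)

lemma evf_torus_rel: "evf a1 a2 t (word_pow gen_x p @ inv_word (word_pow gen_y q)) = id"
proof -
  have y: "W.ev (word_pow gen_y q) = Cf t (of_int Z * pi)" using evf_pow_y[OF t, of a1 a2 q] qa by (simp add: evf_eq)
  have "W.ev (inv_word (word_pow gen_y q)) = Cf t (- (of_int Z * pi))"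
    by (rule W.ev_inv_hom[where C = "Cf t", OF Cf_add[OF t] Cf_0[OF t] y])
  also have "\<dots> = T (of_int (-Z) * pi)" using Cf_int_pi[OF t, of "-Z"] by simp
  finally have yi: "W.ev (inv_word (word_pow gen_y q)) = T (of_int (-Z) * pi)" .
  have x: "W.ev (word_pow gen_x p) = T (of_int Z * pi)" using evf_pow_x[OF t, of a1 a2 p] pa by (simp add: evf_eq)
  show ?thesis by (simp add: evf_eq W.ev_append x yi T_add T_0)
qed

lemma evf_torus: "r \<in> torus_relators p q \<Longrightarrow> evf a1 a2 t r = id"
  using evf_torus_rel by (simp add: torus_relators_def)

lemma evf_zw: "evf a1 a2 t (zw p) = T (of_int Z * pi)"
  using evf_pow_x[OF t, of a1 a2 p] pa by (simp add: zw_def)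

lemma evf_zpow: "evf a1 a2 t (zpow p k) = T (of_int k * (of_int Z * pi))"
  unfolding zpow_def evf_eq
  by (rule W.ev_word_pow_hom[where C = T, OF T_add T_0 evf_zw[unfolded evf_eq]])

lemma evf_nfw: "evf a1 a2 t (nfw p k B) = T (of_int k * (of_int Z * pi)) \<circ> evf a1 a2 t (concat (map blk B))"
  by (simp add: nfw_def evf_append evf_zpow)

lemma evf_torus_eq: "pres_eq (torus_relators p q) u v \<Longrightarrow> evf a1 a2 t u = evf a1 a2 t v"
  unfolding evf_eq by (rule W.ev_pres_eq) (auto simp: evf_torus[unfolded evf_eq])

lemma evf_surgery:
  assumes hh: "\<And>\<theta>. h (hi \<theta>) = \<theta>" "\<And>\<theta>. hi (h \<theta>) = \<theta>" "per h"
    and F: "\<And>\<theta>. evf a1 a2 t (torus_meridian p q) \<theta> = h (hi \<theta> + \<psi>)"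
    and rel: "(of_int p * of_int q * of_int n - 1) * \<psi> = of_int n * of_int Z * pi"
  shows "evf a1 a2 t (torus_meridian p q @ word_pow (torus_longitude p q) n) = id"
proof -
  define C where "C s = (\<lambda>\<theta>. h (hi \<theta> + s))" for s
  have Cadd: "C a \<circ> C b = C (a + b)" for a b using hh(2) by (auto simp: C_def fun_eq_iff algebra_simps)
  have C0: "C 0 = id" using hh(1) by (auto simp: C_def fun_eq_iff)
  have m: "W.ev (torus_meridian p q) = C \<psi>" using F by (auto simp: C_def fun_eq_iff evf_eq)
  have mp: "W.ev (word_pow (torus_meridian p q) k) = C (of_int k * \<psi>)" for k
    by (rule W.ev_word_pow_hom[where C = C, OF Cadd C0 m])
  have x: "W.ev (word_pow gen_x p) = C (of_int Z * pi)"
  proof -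
    have "W.ev (word_pow gen_x p) = T (of_int Z * pi)" using evf_pow_x[OF t, of a1 a2 p] pa by (simp add: evf_eq)
    moreover have "T (of_int Z * pi) = C (of_int Z * pi)"
      using per_int[OF hh(3)] hh(1) by (auto simp: C_def T_def fun_eq_iff)
    ultimately show ?thesis by simp
  qed
  have l: "W.ev (torus_longitude p q) = C (of_int Z * pi - of_int (p * q) * \<psi>)"
    unfolding torus_longitude_def W.ev_append x mp Cadd by simp
  have lp: "W.ev (word_pow (torus_longitude p q) n) = C (of_int n * (of_int Z * pi - of_int (p * q) * \<psi>))"
    by (rule W.ev_word_pow_hom[where C = C, OF Cadd C0 l])
  have "\<psi> + of_int n * (of_int Z * pi - of_int (p * q) * \<psi>) = 0"
    using rel by (simp add: algebra_simps)
  then show ?thesis unfolding evf_eq W.ev_append m lp Cadd by (simp add: C0)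
qed

end


lemma coeff_mult_top:
  fixes p q :: "'a::comm_ring_1 poly"
  assumes "degree p \<le> a" "degree q \<le> b"
  shows "coeff (p * q) (a + b) = coeff p a * coeff q b"
proof (cases "degree p = a \<and> degree q = b")
  case True
  then show ?thesis using coeff_mult_degree_sum[of p q] by simp
next
  case False
  then have z: "coeff p a * coeff q b = 0"
    using assms by (metis coeff_eq_0 le_neq_implies_less mult_zero_left mult_zero_right)
  have "degree (p * q) < a + b" using False assms degree_mult_le[of p q] by linarith
  then have "coeff (p * q) (a + b) = 0" by (rule coeff_eq_0)
  then show ?thesis using z by simp
qed

lemma degree_mult_bound:
  fixes p q :: "'a::comm_ring_1 poly"
  shows "degree p \<le> a \<Longrightarrow> degree q \<le> b \<Longrightarrow> degree (p * q) \<le> a + b"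
  using degree_mult_le[of p q] by linarith

fun dg :: "nat \<Rightarrow> real poly m2 \<Rightarrow> bool" where
  "dg n (M2 a b c d) \<longleftrightarrow> degree a \<le> n \<and> degree b \<le> n \<and> degree c \<le> n \<and> degree d \<le> n"

fun cm :: "nat \<Rightarrow> real poly m2 \<Rightarrow> real m2" where
  "cm n (M2 a b c d) = M2 (coeff a n) (coeff b n) (coeff c n) (coeff d n)"

lemma dg_mul: "dg m P \<Longrightarrow> dg n Q \<Longrightarrow> dg (m + n) (m2mul P Q)"
  by (cases P; cases Q) (auto intro!: degree_add_le degree_mult_bound)

lemma cm_mul: "dg m P \<Longrightarrow> dg n Q \<Longrightarrow> cm (m + n) (m2mul P Q) = m2mul (cm m P) (cm n Q)"
  by (cases P; cases Q) (simp add: coeff_mult_top)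

section \<open>Polynomial matrices for blocks\<close>

fun pconst :: "real m2 \<Rightarrow> real poly m2" where
  "pconst (M2 a b c d) = M2 [:a:] [:b:] [:c:] [:d:]"

definition PY :: "real \<Rightarrow> real poly m2" where
  "PY \<phi> = M2 [:0, cos \<phi>:] [:0, 0, - sin \<phi>:] [:sin \<phi>:] [:0, cos \<phi>:]"

definition Pblk :: "real \<Rightarrow> real \<Rightarrow> bool \<times> nat \<Rightarrow> real poly m2" where
  "Pblk a1 a2 b = (if fst b then PY (real (snd b) * a2) else pconst (rot (real (snd b) * a1)))"

fun PB :: "real \<Rightarrow> real \<Rightarrow> (bool \<times> nat) list \<Rightarrow> real poly m2" where
  "PB a1 a2 [] = m2id"
| "PB a1 a2 (b # B) = m2mul (Pblk a1 a2 b) (PB a1 a2 B)"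

fun numY :: "(bool \<times> nat) list \<Rightarrow> nat" where
  "numY [] = 0"
| "numY (b # B) = (if fst b then Suc (numY B) else numY B)"

fun evat :: "real \<Rightarrow> real poly m2 \<Rightarrow> real m2" where
  "evat t (M2 a b c d) = M2 (poly a t) (poly b t) (poly c t) (poly d t)"

fun sc :: "real \<Rightarrow> real m2 \<Rightarrow> real m2" where
  "sc k (M2 a b c d) = M2 (k * a) (k * b) (k * c) (k * d)"

lemma evat_mul: "evat t (m2mul P Q) = m2mul (evat t P) (evat t Q)"
  by (cases P; cases Q) simp

lemma evat_id: "evat t m2id = m2id"
  by (simp add: m2id_def)

lemma sc_mul: "m2mul (sc a M) (sc b N) = sc (a * b) (m2mul M N)"
  by (cases M; cases N) (simp add: algebra_simps)

lemma sc_1: "sc 1 M = M"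
  by (cases M) simp

lemma Ym_PY: "t > 0 \<Longrightarrow> Ym t \<phi> = sc (1 / t) (evat t (PY \<phi>))"
  by (simp add: Ym_explicit PY_def power2_eq_square field_simps)

lemma rot_pconst: "rot \<phi> = evat t (pconst (rot \<phi>))"
  by (simp add: rot_def)

lemma blk_pow: "blk (v, i) = word_pow [(True, v)] (int i)"
  by (simp add: blk_def word_pow_single)

lemma evm_concat_blocks:
  assumes t: "t > 0"
  shows "evm a1 a2 t (concat (map blk B)) = sc (1 / t ^ numY B) (evat t (PB a1 a2 B))"
proof (induction B)
  case Nil then show ?case using t by (simp add: evm_simps evat_id sc_1)
next
  case (Cons b B)
  interpret W: wgrp m2mul m2id "genm a1 a2 t" by (rule wgrp_m[OF t])
  obtain v i where b: "b = (v, i)" by (cases b)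
  have app: "evm a1 a2 t (concat (map blk (b # B))) = m2mul (evm a1 a2 t (blk b)) (evm a1 a2 t (concat (map blk B)))"
    by (simp add: evm_def W.ev_append)
  show ?case
  proof (cases v)
    case True
    have "evm a1 a2 t (blk b) = sc (1 / t) (evat t (PY (real i * a2)))"
      using evm_pow_y[OF t, of a1 a2 "int i"] Ym_PY[OF t] b True by (simp add: blk_pow gen_y_def)
    then show ?thesis using app Cons b True by (simp add: sc_mul evat_mul Pblk_def)
  next
    case False
    have "evm a1 a2 t (blk b) = sc 1 (evat t (pconst (rot (real i * a1))))"
      using evm_pow_x[OF t, of a1 a2 "int i"] b False rot_pconst sc_1 by (simp add: blk_pow gen_x_def)
    then show ?thesis using app Cons b False by (simp add: sc_mul evat_mul Pblk_def)
  qed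
qed


fun nonscal :: "real m2 \<Rightarrow> bool" where
  "nonscal (M2 a b c d) \<longleftrightarrow> b \<noteq> 0 \<or> c \<noteq> 0 \<or> a \<noteq> d"
fun isscal :: "real m2 \<Rightarrow> bool" where
  "isscal (M2 a b c d) \<longleftrightarrow> b = 0 \<and> c = 0 \<and> a = d"
fun row2z :: "real m2 \<Rightarrow> bool" where
  "row2z (M2 a b c d) \<longleftrightarrow> c = 0 \<and> d = 0"

lemma dg_PY: "dg 2 (PY \<phi>)"
  by (simp add: PY_def degree_pCons_le)

lemma dg_pconst: "dg 0 (pconst M)"
  by (cases M) simp

lemma dg_id: "dg 0 m2id"
  by (simp add: m2id_def)

lemma dg_PB: "dg (2 * numY B) (PB a1 a2 B)"
proof (induction B)
  case Nil then show ?case by (simp add: dg_id)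
next
  case (Cons b B)
  show ?case
  proof (cases "fst b")
    case True
    then show ?thesis using dg_mul[OF dg_PY Cons] by (simp add: Pblk_def)
  next
    case False
    then show ?thesis using dg_mul[OF dg_pconst Cons] by (simp add: Pblk_def)
  qed
qed

lemma cm_PY: "cm 2 (PY \<phi>) = M2 0 (- sin \<phi>) 0 0"
  by (simp add: PY_def numeral_2_eq_2)

lemma cm_pconst: "cm 0 (pconst M) = M"
  by (cases M) simp

lemma cm_id: "cm 0 m2id = m2id"
  by (simp add: m2id_def)

lemma PB_inv:
  assumes "valid p q B" "B \<noteq> []"
    and s1: "\<And>i. 0 < i \<Longrightarrow> i < NN p q False \<Longrightarrow> sin (real i * a1) \<noteq> 0"
    and s2: "\<And>i. 0 < i \<Longrightarrow> i < NN p q True \<Longrightarrow> sin (real i * a2) \<noteq> 0"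
  shows "nonscal (cm (2 * numY B) (PB a1 a2 B))
    \<and> (fst (hd B) \<longrightarrow> row2z (cm (2 * numY B) (PB a1 a2 B)) \<and> cm (2 * numY B) (PB a1 a2 B) \<noteq> M2 0 0 0 0)
    \<and> (\<not> fst (hd B) \<longrightarrow> \<not> row2z (cm (2 * numY B) (PB a1 a2 B)))"
  using assms(1,2)
proof (induction B)
  case Nil then show ?case by simp
next
  case (Cons b B)
  obtain v i where b: "b = (v, i)" by (cases b)
  have vi: "0 < i" "i < NN p q v" using Cons.prems(1) b by (auto simp: valid_def)
  let ?T = "cm (2 * numY B) (PB a1 a2 B)"
  show ?case
  proof (cases "B = []")
    case True
    show ?thesis
    proof (cases v)
      case vT: True
      have "sin (real i * a2) \<noteq> 0" using s2 vi vT by simp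
      moreover have "cm (2 * numY (b # B)) (PB a1 a2 (b # B)) = M2 0 (- sin (real i * a2)) 0 0"
        using True b vT cm_mul[OF dg_PY[of "real i * a2"] dg_id] by (simp add: Pblk_def cm_PY cm_id)
      ultimately show ?thesis using b vT by simp
    next
      case vF: False
      have "sin (real i * a1) \<noteq> 0" using s1 vi vF by simp
      moreover have "cm (2 * numY (b # B)) (PB a1 a2 (b # B)) = rot (real i * a1)"
        using True b vF cm_mul[OF dg_pconst[of "rot (real i * a1)"] dg_id] by (simp add: Pblk_def cm_pconst cm_id)
      ultimately show ?thesis using b vF by (simp add: rot_def)
    qed
  next
    case False
    then obtain b' B' where B: "B = b' # B'" by (cases B) auto
    have vB: "valid p q B" using Cons.prems(1) B by (auto simp: valid_def)
    have alt: "fst b \<noteq> fst (hd B)" using Cons.prems(1) B by (simp add: valid_def)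
    have IH: "nonscal ?T \<and> (fst (hd B) \<longrightarrow> row2z ?T \<and> ?T \<noteq> M2 0 0 0 0) \<and> (\<not> fst (hd B) \<longrightarrow> \<not> row2z ?T)"
      using Cons.IH[OF vB False] .
    obtain a' b'' c' d' where T: "?T = M2 a' b'' c' d'" by (cases ?T)
    show ?thesis
    proof (cases v)
      case vT: True
      let ?S = "sin (real i * a2)"
      have S: "?S \<noteq> 0" using s2 vi vT by simp
      have h: "\<not> fst (hd B)" using alt b vT by simp
      have "cm (2 * numY (b # B)) (PB a1 a2 (b # B)) = m2mul (M2 0 (- ?S) 0 0) ?T"
        using cm_mul[OF dg_PY[of "real i * a2"] dg_PB[of B a1 a2]] b vT by (simp add: Pblk_def cm_PY)
      also have "\<dots> = M2 (- ?S * c') (- ?S * d') 0 0" by (simp add: T)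
      finally have e: "cm (2 * numY (b # B)) (PB a1 a2 (b # B)) = M2 (- ?S * c') (- ?S * d') 0 0" .
      have "\<not> (c' = 0 \<and> d' = 0)" using IH h T by simp
      then show ?thesis using e S b vT by auto
    next
      case vF: False
      let ?s = "sin (real i * a1)" and ?c = "cos (real i * a1)"
      have S: "?s \<noteq> 0" using s1 vi vF by simp
      have h: "fst (hd B)" using alt b vF by simp
      have "cm (2 * numY (b # B)) (PB a1 a2 (b # B)) = m2mul (rot (real i * a1)) ?T"
        using cm_mul[OF dg_pconst[of "rot (real i * a1)"] dg_PB[of B a1 a2]] b vF by (simp add: Pblk_def cm_pconst)
      also have "\<dots> = M2 (?c * a' - ?s * c') (?c * b'' - ?s * d') (?s * a' + ?c * c') (?s * b'' + ?c * d')"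
        by (simp add: T rot_def)
      finally have e: "cm (2 * numY (b # B)) (PB a1 a2 (b # B)) = M2 (?c * a' - ?s * c') (?c * b'' - ?s * d') (?s * a' + ?c * c') (?s * b'' + ?c * d')" .
      have z: "c' = 0" "d' = 0" "\<not> (a' = 0 \<and> b'' = 0)" using IH h T by auto
      show ?thesis
      proof -
        have ns: "nonscal (M2 (?c * a') (?c * b'') (?s * a') (?s * b''))"
        proof (cases "a' = 0")
          case False then show ?thesis using S by simp
        next
          case True
          then have "b'' \<noteq> 0" using z by simp
          then show ?thesis using True S by (cases "?c = 0") auto
        qed
        have nr: "\<not> row2z (M2 (?c * a') (?c * b'') (?s * a') (?s * b''))" using S z by auto
        show ?thesis using e z ns nr b vF by simp
      qed
    qed
  qed
qed

lemma PB_poly_nz: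
  assumes "valid p q B" "B \<noteq> []"
    and s1: "\<And>i. 0 < i \<Longrightarrow> i < NN p q False \<Longrightarrow> sin (real i * a1) \<noteq> 0"
    and s2: "\<And>i. 0 < i \<Longrightarrow> i < NN p q True \<Longrightarrow> sin (real i * a2) \<noteq> 0"
  shows "\<exists>P. P \<noteq> 0 \<and> (\<forall>t. isscal (evat t (PB a1 a2 B)) \<longrightarrow> poly P t = 0)"
proof -
  obtain a b c d where P: "PB a1 a2 B = M2 a b c d" by (cases "PB a1 a2 B")
  let ?n = "2 * numY B"
  have "nonscal (cm ?n (PB a1 a2 B))" using PB_inv[OF assms] by blast
  then have "coeff b ?n \<noteq> 0 \<or> coeff c ?n \<noteq> 0 \<or> coeff (a - d) ?n \<noteq> 0" using P by auto
  then show ?thesis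
  proof (elim disjE)
    assume "coeff b ?n \<noteq> 0" then show ?thesis using P by (intro exI[of _ b]) auto
  next
    assume "coeff c ?n \<noteq> 0" then show ?thesis using P by (intro exI[of _ c]) auto
  next
    assume "coeff (a - d) ?n \<noteq> 0" then show ?thesis using P by (intro exI[of _ "a - d"]) auto
  qed
qed

lemma isscal_sc: "k \<noteq> 0 \<Longrightarrow> isscal (sc k M) \<Longrightarrow> isscal M"
  by (cases M) auto

lemma finite_scalar_t:
  assumes "valid p q B" "B \<noteq> []"
    and s1: "\<And>i. 0 < i \<Longrightarrow> i < NN p q False \<Longrightarrow> sin (real i * a1) \<noteq> 0"
    and s2: "\<And>i. 0 < i \<Longrightarrow> i < NN p q True \<Longrightarrow> sin (real i * a2) \<noteq> 0"
  shows "finite {t. t > 0 \<and> isscal (evm a1 a2 t (concat (map blk B)))}"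
proof -
  obtain P where P: "P \<noteq> 0" "\<And>t. isscal (evat t (PB a1 a2 B)) \<Longrightarrow> poly P t = 0"
    using PB_poly_nz[OF assms] by blast
  have "{t. t > 0 \<and> isscal (evm a1 a2 t (concat (map blk B)))} \<subseteq> {t. poly P t = 0}"
  proof
    fix t assume "t \<in> {t. t > 0 \<and> isscal (evm a1 a2 t (concat (map blk B)))}"
    then have t: "t > 0" and i: "isscal (sc (1 / t ^ numY B) (evat t (PB a1 a2 B)))"
      using evm_concat_blocks by auto
    have "isscal (evat t (PB a1 a2 B))" by (rule isscal_sc[OF _ i]) (use t in simp)
    then show "t \<in> {t. poly P t = 0}" using P by simp
  qed
  moreover have "finite {t. poly P t = 0}" by (rule poly_roots_finite[OF P(1)])
  ultimately show ?thesis by (rule finite_subset)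
qed


lemma evm_append: "t > 0 \<Longrightarrow> evm a1 a2 t (u @ v) = m2mul (evm a1 a2 t u) (evm a1 a2 t v)"
  using wgrp.ev_append[OF wgrp_m] by (simp add: evm_def)

lemma evf_append': "t > 0 \<Longrightarrow> evf a1 a2 t (u @ v) = evf a1 a2 t u \<circ> evf a1 a2 t v"
  using wgrp.ev_append[OF wgrp_f] by (simp add: evf_def)

lemma surgery_ok:
  fixes p q Z n :: int and t \<psi> :: real
  defines "a1 \<equiv> of_int Z * pi / of_int p" and "a2 \<equiv> of_int Z * pi / of_int q"
  defines "A \<equiv> of_int (fst (mcd p q)) * a2" and "B \<equiv> of_int (snd (mcd p q)) * a1"
  assumes nt: "nontrivial_torus p q" and t: "1 \<le> t" "t \<le> 3"
    and tr: "2 * cos A * cos B - sin A * sin B * (t + 1 / t) = 2 * cos \<psi>"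
    and sg: "(sin A * cos B / t + cos A * sin B) / sin \<psi> > 0"
    and s\<psi>: "sin \<psi> \<noteq> 0"
    and near: "\<bar>A + B - \<psi>\<bar> \<le> pi / 2"
    and rel: "(of_int p * of_int q * of_int n - 1) * \<psi> = of_int n * of_int Z * pi"
  shows "evf a1 a2 t (torus_meridian p q @ word_pow (torus_longitude p q) n) = id"
proof -
  have t0: "t > 0" using t by simp
  have tnz: "t \<noteq> 0" using t by simp
  have p0: "p \<noteq> 0" and q0: "q \<noteq> 0" using nt by (auto simp: nontrivial_torus_def)
  interpret R: rep p q Z t a1 a2
    by unfold_locales (use t0 p0 q0 in \<open>auto simp: a1_def a2_def\<close>)
  let ?c = "fst (mcd p q)" and ?d = "snd (mcd p q)"
  let ?M = "evm a1 a2 t (torus_meridian p q)"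
  let ?F = "evf a1 a2 t (torus_meridian p q)"
  have M: "?M = M2 (cos A * cos B - t * sin A * sin B) (- cos A * sin B - t * sin A * cos B)
                  (sin A * cos B / t + cos A * sin B) (- (sin A / t) * sin B + cos A * cos B)"
    unfolding meridian_eq evm_append[OF t0] evm_pow_y[OF t0] evm_pow_x[OF t0] Ym_explicit[OF tnz] A_def[symmetric] B_def[symmetric]
    using t0 by (simp add: rot_def algebra_simps)
  have lF: "lifts ?M ?F" and dM: "m2det ?M = 1" using lifts_ev[OF t0] by auto
  have F: "?F = Cf t A \<circ> T B"
    unfolding meridian_eq evf_append'[OF t0] evf_pow_y[OF t0] evf_pow_x[OF t0] A_def B_def ..
  have F0: "?F (- B) = fD t A"
    unfolding F using fD_props(8)[OF t0] by (simp add: Cf_def T_def)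
  have bnd: "\<bar>fD t A - A\<bar> \<le> pi / 4" by (rule fD_bound[OF t])
  have nearF: "\<bar>?F (- B) - (- B) - \<psi>\<bar> < pi"
    using bnd near pi_gt_zero unfolding F0 abs_le_iff abs_less_iff by linarith
  have trM: "(cos A * cos B - t * sin A * sin B) + (- (sin A / t) * sin B + cos A * cos B) = 2 * cos \<psi>"
    using tr t0 by (simp add: field_simps)
  obtain h hi where hh: "\<And>\<theta>. h (hi \<theta>) = \<theta>" "\<And>\<theta>. hi (h \<theta>) = \<theta>" "per h" "per hi"
      "\<And>\<theta>. ?F \<theta> = h (hi \<theta> + \<psi>)"
    using elliptic_conj[OF lF[unfolded M] dM[unfolded M m2det.simps] trM s\<psi> sg nearF[unfolded M]] 
    by blast
  show ?thesis
    by (rule R.evf_surgery[OF hh(1) hh(2) hh(3) hh(5) rel])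
qed


lemma sin_frac_zero:
  assumes m: "m \<noteq> 0" and s: "sin (of_int k * pi / of_int m) = 0"
  shows "m dvd k"
proof -
  obtain i :: int where "of_int k * pi / of_int m = of_int i * pi" using s sin_zero_iff_int2 by blast
  then have "of_int k = (of_int i * of_int m :: real)" using m by (simp add: field_simps)
  then have "k = i * m" by (metis of_int_eq_iff of_int_mult)
  then show ?thesis by simp
qed

lemma sin_nat_pi: "sin (x + real n * pi) = (if even n then sin x else - sin x)"
proof (induction n)
  case 0 then show ?case by simp
next
  case (Suc n)
  have "sin (x + real (Suc n) * pi) = sin ((x + real n * pi) + pi)" by (simp add: algebra_simps)
  also have "\<dots> = - sin (x + real n * pi)" by simp
  finally show ?case using Suc by simp
qed

lemma sin_int_pi: "sin (x + of_int k * pi) = (if even k then sin x else - sin x)"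
proof (cases "k \<ge> 0")
  case True
  then show ?thesis using sin_nat_pi[of x "nat k"] by (simp add: even_nat_iff)
next
  case False
  have "sin ((x + of_int k * pi) + real (nat (-k)) * pi) = (if even (nat (-k)) then sin (x + of_int k * pi) else - sin (x + of_int k * pi))"
    by (rule sin_nat_pi)
  moreover have "(x + of_int k * pi) + real (nat (-k)) * pi = x" using False by simp
  moreover have "even (nat (-k)) = even k" using False by (simp add: even_nat_iff)
  ultimately show ?thesis by (auto split: if_splits)
qed


lemma ivt_choice:
  fixes G0 K \<alpha> \<beta> Cc :: real and v :: "int \<Rightarrow> real"
  assumes K: "K \<noteq> 0" and s1: "\<alpha> + \<beta> \<noteq> 0"
    and sg: "\<And>n. n \<ge> N0 \<Longrightarrow> (v n - (G0 - 2 * K)) * K < 0"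
    and conv: "\<And>n. n \<ge> N0 \<Longrightarrow> \<bar>v n - (G0 - 2 * K)\<bar> \<le> Cc / of_int n"
    and N0: "N0 \<ge> 1"
  shows "\<exists>N. \<forall>n\<ge>N. \<exists>t. 1 \<le> t \<and> t \<le> 2 \<and> G0 - K * (t + 1 / t) = v n \<and> (\<alpha> / t + \<beta>) * (\<alpha> + \<beta>) > 0"
proof -
  let ?s = "\<alpha> + \<beta>"
  define T where "T = 1 + min 1 (\<bar>?s\<bar> / (2 * (\<bar>\<alpha>\<bar> + 1)))"
  have sp: "\<bar>?s\<bar> > 0" using s1 by simp
  have T1: "T > 1" using sp unfolding T_def by (simp add: min_def)
  have T2: "T \<le> 2" unfolding T_def by simp
  have Tm: "T - 1 \<le> \<bar>?s\<bar> / (2 * (\<bar>\<alpha>\<bar> + 1))" unfolding T_def by simp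
  have mpos: "(\<alpha> / t + \<beta>) * ?s > 0" if t: "1 \<le> t" "t \<le> T" for t
  proof -
    define e where "e = \<alpha> / t + \<beta> - ?s"
    have e: "e = \<alpha> * (1 - t) / t" unfolding e_def using t by (simp add: field_simps)
    have "\<bar>e\<bar> = \<bar>\<alpha>\<bar> * (t - 1) / t" unfolding e using t by (simp add: abs_mult abs_divide)
    also have "\<dots> \<le> \<bar>\<alpha>\<bar> * (t - 1) / 1" using t by (intro divide_left_mono) auto
    also have "\<dots> \<le> \<bar>\<alpha>\<bar> * (\<bar>?s\<bar> / (2 * (\<bar>\<alpha>\<bar> + 1)))" unfolding div_by_1 using t Tm by (intro mult_left_mono) auto
    also have "\<dots> < \<bar>?s\<bar> / 2"
    proof -
      have "\<bar>\<alpha>\<bar> * \<bar>?s\<bar> < (\<bar>\<alpha>\<bar> + 1) * \<bar>?s\<bar>" using sp by simp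
      then show ?thesis by (simp add: field_simps)
    qed
    finally have eb: "\<bar>e\<bar> < \<bar>?s\<bar> / 2" .
    have "(\<alpha> / t + \<beta>) * ?s = ?s * ?s + e * ?s" unfolding e_def by (simp add: algebra_simps)
    moreover have "\<bar>e * ?s\<bar> < \<bar>?s\<bar> * \<bar>?s\<bar> / 2"
    proof -
      have "(\<bar>e\<bar> * 2) * \<bar>?s\<bar> < \<bar>?s\<bar> * \<bar>?s\<bar>" using eb sp by (intro mult_strict_right_mono) auto
      then show ?thesis unfolding abs_mult by linarith
    qed
    moreover have "?s * ?s = \<bar>?s\<bar> * \<bar>?s\<bar>" by (simp add: abs_mult[symmetric])
    moreover have "\<bar>?s\<bar> * \<bar>?s\<bar> > 0" using sp by (intro mult_pos_pos)
    ultimately show ?thesis unfolding abs_less_iff by linarith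
  qed
  define \<delta> where "\<delta> = T + 1 / T - 2"
  have \<delta>: "\<delta> > 0"
  proof -
    have "\<delta> = (T - 1)^2 / T" unfolding \<delta>_def using T1 by (simp add: field_simps power2_eq_square)
    then show ?thesis using T1 by simp
  qed
  define \<epsilon> where "\<epsilon> = \<bar>K\<bar> * \<delta>"
  have \<epsilon>: "\<epsilon> > 0" unfolding \<epsilon>_def using K \<delta> by simp
  obtain N1 :: int where N1: "of_int N1 > Cc / \<epsilon>" by (meson ex_less_of_int)
  define N where "N = max N0 (max N1 1)"
  show ?thesis
  proof (intro exI[of _ N] allI impI)
    fix n assume nN: "n \<ge> N"
    have nN0: "n \<ge> N0" and n1: "n \<ge> 1" and nN1: "n \<ge> N1" using nN unfolding N_def by auto
    have npos: "(of_int n :: real) > 0" using n1 by simp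
    let ?g = "\<lambda>t. G0 - K * (t + 1 / t)"
    let ?g1 = "G0 - 2 * K"
    have g1: "?g 1 = ?g1" by simp
    have gT: "?g T = ?g1 - K * \<delta>" unfolding \<delta>_def by (simp add: algebra_simps)
    have "\<bar>v n - ?g1\<bar> \<le> Cc / of_int n" by (rule conv[OF nN0])
    also have "\<dots> < \<epsilon>"
    proof -
      have "Cc < \<epsilon> * of_int N1" using N1 \<epsilon> by (simp add: field_simps)
      also have "\<dots> \<le> \<epsilon> * of_int n" using nN1 \<epsilon> by simp
      finally show ?thesis using npos by (simp add: field_simps)
    qed
    finally have close: "\<bar>v n - ?g1\<bar> < \<epsilon>" .
    have sgn: "(v n - ?g1) * K < 0" by (rule sg[OF nN0])
    have cont: "\<forall>x. 1 \<le> x \<and> x \<le> T \<longrightarrow> isCont ?g x"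
      by (auto intro!: continuous_intros)
    have "\<exists>t. 1 \<le> t \<and> t \<le> T \<and> ?g t = v n"
    proof (cases "K > 0")
      case True
      have a: "v n < ?g1" using sgn True by (simp add: mult_less_0_iff)
      have b: "?g T \<le> v n" using close True gT unfolding \<epsilon>_def by (simp add: abs_less_iff)
      show ?thesis by (rule IVT2[OF b _ _ cont]) (use a T1 in auto)
    next
      case False
      then have Kn: "K < 0" using K by simp
      have a: "v n > ?g1" using sgn Kn by (simp add: mult_less_0_iff)
      have b: "v n \<le> ?g T" using close Kn gT unfolding \<epsilon>_def by (simp add: abs_less_iff)
      show ?thesis by (rule IVT[OF _ b _ cont]) (use a T1 in auto)
    qed
    then obtain t where t: "1 \<le> t" "t \<le> T" "?g t = v n" by blast
    show "\<exists>t. 1 \<le> t \<and> t \<le> 2 \<and> G0 - K * (t + 1 / t) = v n \<and> (\<alpha> / t + \<beta>) * (\<alpha> + \<beta>) > 0"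
      using t T2 mpos[OF t(1,2)] by (intro exI[of _ t]) auto
  qed
qed


lemma cos_lip: "\<bar>cos x - cos y\<bar> \<le> \<bar>x - (y::real)\<bar>"
proof -
  have "\<bar>cos x - cos y\<bar> = 2 * \<bar>sin ((x + y) / 2)\<bar> * \<bar>sin ((y - x) / 2)\<bar>"
    by (simp add: cos_diff_cos abs_mult)
  also have "\<dots> \<le> 2 * 1 * \<bar>(y - x) / 2\<bar>"
    by (intro mult_mono abs_sin_x_le_abs_x) (auto simp: abs_sin_le_one)
  finally show ?thesis by simp
qed

lemma sin_sign: "0 < \<bar>x::real\<bar> \<Longrightarrow> \<bar>x\<bar> < pi \<Longrightarrow> sin x * x > 0"
proof (cases "x > 0")
  case True
  assume "\<bar>x\<bar> < pi"
  then show ?thesis using True sin_gt_zero[of x] by simp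
next
  case False
  assume "0 < \<bar>x\<bar>" "\<bar>x\<bar> < pi"
  then have "0 < sin (-x)" using False by (intro sin_gt_zero) auto
  then show ?thesis using False \<open>0 < \<bar>x\<bar>\<close> by (simp add: mult_neg_neg)
qed

lemma lift_trans_scalar:
  assumes l: "lifts M (T (of_int m * pi))"
  shows "isscal M"
proof -
  obtain a b c d where M: "M = M2 a b c d" by (cases M)
  have key: "(a * cos \<theta> + b * sin \<theta>) * sin \<theta> = (c * cos \<theta> + d * sin \<theta>) * cos \<theta>" for \<theta>
  proof -
    have e: "cis (\<theta> + of_int m * pi) = sgn (act M (cis \<theta>))" using l unfolding lifts_def T_def by simp
    have "cis (of_int m * pi) = complex_of_real (cos (of_int m * pi))"
      by (simp add: complex_eq_iff sin_zero_iff_int2)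
    then have "cis (\<theta> + of_int m * pi) = complex_of_real (cos (of_int m * pi)) * cis \<theta>"
      by (simp add: cis_mult[symmetric] mult.commute)
    moreover have z: "act M (cis \<theta>) = complex_of_real (cmod (act M (cis \<theta>))) * sgn (act M (cis \<theta>))"
      by (cases "act M (cis \<theta>) = 0") (simp_all add: sgn_eq)
    ultimately have "act M (cis \<theta>) = complex_of_real (cmod (act M (cis \<theta>)) * cos (of_int m * pi)) * cis \<theta>"
      using e by (simp add: mult.assoc)
    then obtain r :: real where "act M (cis \<theta>) = complex_of_real r * cis \<theta>" by blast
    then have "a * cos \<theta> + b * sin \<theta> = r * cos \<theta>" "c * cos \<theta> + d * sin \<theta> = r * sin \<theta>"
      using M by (simp_all add: complex_eq_iff cis.ctr)
    then show ?thesis by (simp add: algebra_simps)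
  qed
  have c0: "c = 0" using key[of 0] by simp
  have b0: "b = 0" using key[of "pi/2"] by simp
  have "(a * (sqrt 2 / 2)) * (sqrt 2 / 2) = (d * (sqrt 2 / 2)) * (sqrt 2 / 2)"
    using key[of "pi/4"] b0 c0 by (simp add: cos_45 sin_45)
  then have "a = d" by simp
  then show ?thesis using M b0 c0 by simp
qed


context tor
begin

definition cc where "cc = fst (mcd p q)"
definition dd where "dd = snd (mcd p q)"
definition W :: real where "W = of_int (p * q)"

lemma p0: "p \<noteq> 0" and q0: "q \<noteq> 0" using p2 q2 by auto

lemma cd_eq: "p * cc + q * dd = 1"
  using mcd_prop nt unfolding nontrivial_torus_def cc_def dd_def by blast

lemma absp: "\<bar>p\<bar> \<ge> 2" and absq: "\<bar>q\<bar> \<ge> 2" using p2 q2 by auto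

lemma abspq: "\<bar>p * q\<bar> \<ge> 4"
proof -
  have "\<bar>p * q\<bar> = \<bar>p\<bar> * \<bar>q\<bar>" by (simp add: abs_mult)
  also have "\<dots> \<ge> 2 * 2" using absp absq by (intro mult_mono) auto
  finally show ?thesis by simp
qed

lemma W4: "\<bar>W\<bar> \<ge> 4"
  using abspq unfolding W_def by (metis of_int_abs of_int_le_iff of_int_numeral)

definition a1 :: "int \<Rightarrow> real" where "a1 Z = of_int Z * pi / of_int p"
definition a2 :: "int \<Rightarrow> real" where "a2 Z = of_int Z * pi / of_int q"
definition AA :: "int \<Rightarrow> real" where "AA Z = of_int cc * a2 Z"
definition BB :: "int \<Rightarrow> real" where "BB Z = of_int dd * a1 Z"
definition KK :: "int \<Rightarrow> real" where "KK Z = sin (AA Z) * sin (BB Z)"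
definition \<psi>1 :: "int \<Rightarrow> real" where "\<psi>1 Z = of_int Z * pi / W"
definition \<psi>n :: "int \<Rightarrow> int \<Rightarrow> real" where "\<psi>n Z n = of_int n * of_int Z * pi / (W * of_int n - 1)"

lemma AB_sum: "AA Z + BB Z = \<psi>1 Z"
proof -
  have e: "of_int p * of_int cc + of_int q * of_int dd = (1::real)"
    using cd_eq by (metis of_int_1 of_int_add of_int_mult)
  have "AA Z + BB Z = of_int Z * pi * (of_int p * of_int cc + of_int q * of_int dd) / (of_int p * of_int q)"
    unfolding AA_def BB_def a1_def a2_def using p0 q0 by (simp add: field_simps)
  also have "\<dots> = \<psi>1 Z" unfolding e \<psi>1_def W_def by simp
  finally show ?thesis .
qed

definition Zgood :: "int \<Rightarrow> bool" where "Zgood Z \<longleftrightarrow> (\<exists>j. Z = 1 + j * (p * q))"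

lemma Zgood_sins:
  assumes "Zgood Z"
  shows "sin (AA Z) \<noteq> 0" "sin (BB Z) \<noteq> 0"
    "\<And>i. 0 < i \<Longrightarrow> i < NN p q False \<Longrightarrow> sin (real i * a1 Z) \<noteq> 0"
    "\<And>i. 0 < i \<Longrightarrow> i < NN p q True \<Longrightarrow> sin (real i * a2 Z) \<noteq> 0"
proof -
  obtain j where Z: "Z = 1 + j * (p * q)" using assms unfolding Zgood_def by blast
  show "sin (AA Z) \<noteq> 0"
  proof
    assume "sin (AA Z) = 0"
    then have "sin (of_int (cc * Z) * pi / of_int q) = 0" by (simp add: AA_def a2_def mult.assoc)
    then have "q dvd cc * Z" by (rule sin_frac_zero[OF q0, rotated])
    then have "q dvd cc" using Z by (simp add: algebra_simps dvd_add_left_iff)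
    then have "q dvd p * cc + q * dd" by simp
    then have "q dvd 1" using cd_eq by simp
    then show False using absq by (simp add: zdvd1_eq)
  qed
  show "sin (BB Z) \<noteq> 0"
  proof
    assume "sin (BB Z) = 0"
    then have "sin (of_int (dd * Z) * pi / of_int p) = 0" by (simp add: BB_def a1_def mult.assoc)
    then have "p dvd dd * Z" by (rule sin_frac_zero[OF p0, rotated])
    then have "p dvd dd" using Z by (simp add: algebra_simps dvd_add_left_iff)
    then have "p dvd p * cc + q * dd" by simp
    then have "p dvd 1" using cd_eq by simp
    then show False using absp by (simp add: zdvd1_eq)
  qed
  show "sin (real i * a1 Z) \<noteq> 0" if i: "0 < i" "i < NN p q False" for i
  proof
    assume "sin (real i * a1 Z) = 0"
    then have "sin (of_int (int i * Z) * pi / of_int p) = 0" by (simp add: a1_def mult.assoc)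
    then have "p dvd int i * Z" by (rule sin_frac_zero[OF p0, rotated])
    then have "p dvd int i" using Z by (simp add: algebra_simps dvd_add_left_iff)
    then have "\<bar>p\<bar> \<le> \<bar>int i\<bar>" using i by (intro dvd_imp_le_int) auto
    then show False using i by (simp add: NN_def)
  qed
  show "sin (real i * a2 Z) \<noteq> 0" if i: "0 < i" "i < NN p q True" for i
  proof
    assume "sin (real i * a2 Z) = 0"
    then have "sin (of_int (int i * Z) * pi / of_int q) = 0" by (simp add: a2_def mult.assoc)
    then have "q dvd int i * Z" by (rule sin_frac_zero[OF q0, rotated])
    then have "q dvd int i" using Z by (simp add: algebra_simps dvd_add_left_iff)
    then have "\<bar>q\<bar> \<le> \<bar>int i\<bar>" using i by (intro dvd_imp_le_int) auto
    then show False using i by (simp add: NN_def)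
  qed
qed


lemma even_aux: "x \<noteq> 0 \<Longrightarrow> even (a * \<bar>b\<bar> * sgn x) \<longleftrightarrow> even (a * (b::int))"
  by (cases "x > 0"; cases "b \<ge> 0") (auto simp: sgn_if)

lemma AA_flip: "AA (1 - \<bar>p * q\<bar>) = AA 1 + of_int (- (cc * \<bar>p\<bar> * sgn q)) * pi"
proof -
  have e: "real_of_int q * (\<bar>real_of_int p\<bar> * real_of_int (sgn q)) = \<bar>real_of_int p * real_of_int q\<bar>"
    using q0 by (cases "q > 0") (auto simp: abs_mult sgn_if)
  show ?thesis unfolding AA_def a2_def using q0
    by (simp add: field_simps) (simp add: e)
qed

lemma BB_flip: "BB (1 - \<bar>p * q\<bar>) = BB 1 + of_int (- (dd * \<bar>q\<bar> * sgn p)) * pi"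
proof -
  have e: "real_of_int p * (\<bar>real_of_int q\<bar> * real_of_int (sgn p)) = \<bar>real_of_int p * real_of_int q\<bar>"
    using p0 by (cases "p > 0") (auto simp: abs_mult sgn_if)
  show ?thesis unfolding BB_def a1_def using p0
    by (simp add: field_simps) (simp add: e)
qed

lemma KK_flip: "KK (1 - \<bar>p * q\<bar>) = - KK 1"
proof -
  have e1: "even (- (cc * \<bar>p\<bar> * sgn q)) \<longleftrightarrow> even (cc * p)" using even_aux[OF q0] by (simp add: mult.commute)
  have e2: "even (- (dd * \<bar>q\<bar> * sgn p)) \<longleftrightarrow> even (dd * q)" using even_aux[OF p0] by (simp add: mult.commute)
  have odd: "odd (cc * p + dd * q)" using cd_eq by (simp add: mult.commute)
  then have x: "even (cc * p) \<longleftrightarrow> odd (dd * q)" by auto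
  show ?thesis unfolding KK_def AA_flip BB_flip sin_int_pi e1 e2 using x by auto
qed

definition Zc :: int where "Zc = (if KK 1 * W > 0 then 1 else 1 - \<bar>p * q\<bar>)"

lemma W0: "W \<noteq> 0" using W4 by auto

lemma Zc_props: "Zgood Zc" "KK Zc * W > 0" "1 \<le> \<bar>of_int Zc :: real\<bar>" "\<bar>of_int Zc :: real\<bar> \<le> \<bar>W\<bar> - 1"
proof -
  have g1: "Zgood 1" unfolding Zgood_def by (intro exI[of _ 0]) simp
  have K1: "KK 1 \<noteq> 0" using Zgood_sins(1,2)[OF g1] by (simp add: KK_def)
  have ab: "\<bar>p * q\<bar> = p * q * sgn (p * q)" by (cases "p * q \<ge> 0") (auto simp: sgn_if)
  have g2: "Zgood (1 - \<bar>p * q\<bar>)" unfolding Zgood_def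
    by (intro exI[of _ "- sgn (p * q)"]) (simp add: ab algebra_simps)
  show "Zgood Zc" using g1 g2 by (simp add: Zc_def)
  show "KK Zc * W > 0"
  proof (cases "KK 1 * W > 0")
    case True then show ?thesis by (simp add: Zc_def)
  next
    case False
    then have "KK 1 * W < 0" using K1 W0 by (simp add: not_less order.order_iff_strict mult_eq_0_iff) 
    then show ?thesis using False by (simp add: Zc_def KK_flip)
  qed
  have aW: "\<bar>W\<bar> = of_int \<bar>p * q\<bar>" unfolding W_def by simp
  show "1 \<le> \<bar>of_int Zc :: real\<bar>" "\<bar>of_int Zc :: real\<bar> \<le> \<bar>W\<bar> - 1"
  proof -
    have "of_int Zc = (1::real) \<or> of_int Zc = 1 - \<bar>W\<bar>" unfolding Zc_def W_def by simp
    then show "1 \<le> \<bar>of_int Zc :: real\<bar>" "\<bar>of_int Zc :: real\<bar> \<le> \<bar>W\<bar> - 1"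
      using W4 by auto
  qed
qed

end


context tor
begin

lemma r_bound:
  assumes n: "n \<ge> 2"
  shows "\<bar>W * of_int n - 1\<bar> \<ge> \<bar>W\<bar> * of_int n - 1" "W * of_int n - 1 \<noteq> 0"
    "\<bar>W * of_int n - 1\<bar> \<ge> of_int n"
proof -
  have N: "(of_int n :: real) \<ge> 2" using n by simp
  have "\<bar>W * of_int n\<bar> = \<bar>W\<bar> * of_int n" using N by (simp add: abs_mult)
  moreover have "\<bar>W * of_int n\<bar> - 1 \<le> \<bar>W * of_int n - 1\<bar>" using abs_triangle_ineq2[of "W * of_int n" 1] by simp
  ultimately show r1: "\<bar>W * of_int n - 1\<bar> \<ge> \<bar>W\<bar> * of_int n - 1" by simp
  have "\<bar>W\<bar> * of_int n \<ge> 4 * of_int n" using W4 N by (intro mult_right_mono) auto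
  then show "\<bar>W * of_int n - 1\<bar> \<ge> of_int n" using r1 N by linarith
  then show "W * of_int n - 1 \<noteq> 0" using N by auto
qed

lemma psi_rel:
  assumes n: "n \<ge> 2"
  shows "(of_int p * of_int q * of_int n - 1) * \<psi>n Z n = of_int n * of_int Z * pi"
  using r_bound(2)[OF n] unfolding \<psi>n_def W_def by simp

lemma psi_diff:
  assumes n: "n \<ge> 2" and z: "\<bar>of_int Z :: real\<bar> \<le> \<bar>W\<bar> - 1"
  shows "\<bar>\<psi>n Z n - \<psi>1 Z\<bar> \<le> pi / of_int n"
proof -
  let ?r = "W * of_int n - 1"
  have r0: "?r \<noteq> 0" by (rule r_bound(2)[OF n])
  have e: "\<psi>n Z n - \<psi>1 Z = of_int Z * pi / (W * ?r)"
    unfolding \<psi>n_def \<psi>1_def using r0 W0 by (simp add: field_simps)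
  have "\<bar>\<psi>n Z n - \<psi>1 Z\<bar> = (\<bar>of_int Z\<bar> / \<bar>W\<bar>) * (pi / \<bar>?r\<bar>)"
    unfolding e by (simp add: abs_mult abs_divide)
  also have "\<dots> \<le> 1 * (pi / \<bar>?r\<bar>)"
    using z W0 by (intro mult_right_mono) (auto simp: divide_le_eq_1)
  also have "\<dots> \<le> pi / of_int n"
    unfolding mult_1_left using r_bound(3)[OF n] n by (intro divide_left_mono) auto
  finally show ?thesis by simp
qed

lemma psi_ratio:
  assumes n: "n \<ge> 2"
  shows "\<psi>n Z n = \<psi>1 Z * (W * of_int n / (W * of_int n - 1))"
  unfolding \<psi>n_def \<psi>1_def using r_bound(2)[OF n] W0 by (simp add: field_simps)

lemma psi1_bounds:
  assumes z: "1 \<le> \<bar>of_int Z :: real\<bar>" "\<bar>of_int Z :: real\<bar> \<le> \<bar>W\<bar> - 1"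
  shows "0 < \<bar>\<psi>1 Z\<bar>" "\<bar>\<psi>1 Z\<bar> < pi"
proof -
  have a: "\<bar>\<psi>1 Z\<bar> = \<bar>of_int Z\<bar> * pi / \<bar>W\<bar>" unfolding \<psi>1_def by (simp add: abs_mult abs_divide)
  show "0 < \<bar>\<psi>1 Z\<bar>" using z W0 unfolding a by simp
  have "\<bar>of_int Z\<bar> * pi < \<bar>W\<bar> * pi" using z by simp
  then show "\<bar>\<psi>1 Z\<bar> < pi" unfolding a using W0 by (simp add: divide_less_eq)
qed

lemma psin_bounds:
  assumes n: "n \<ge> 2" and z: "1 \<le> \<bar>of_int Z :: real\<bar>" "\<bar>of_int Z :: real\<bar> \<le> \<bar>W\<bar> - 1"
  shows "0 < \<bar>\<psi>n Z n\<bar>" "\<bar>\<psi>n Z n\<bar> < pi"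
proof -
  let ?r = "W * of_int n - 1"
  have N: "(of_int n :: real) \<ge> 2" using n by simp
  have r0: "?r \<noteq> 0" by (rule r_bound(2)[OF n])
  have a: "\<bar>\<psi>n Z n\<bar> = of_int n * \<bar>of_int Z\<bar> * pi / \<bar>?r\<bar>"
    unfolding \<psi>n_def using N by (simp add: abs_mult abs_divide)
  show "0 < \<bar>\<psi>n Z n\<bar>" unfolding a using z N r0 by simp
  have "of_int n * \<bar>of_int Z\<bar> < \<bar>?r\<bar>"
  proof -
    have "\<bar>?r\<bar> \<ge> \<bar>W\<bar> * of_int n - 1" by (rule r_bound(1)[OF n])
    moreover have "\<bar>W\<bar> * of_int n \<ge> (\<bar>of_int Z\<bar> + 1) * of_int n" using z N by (intro mult_right_mono) auto
    ultimately show ?thesis using N by (simp add: algebra_simps)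
  qed
  then have "of_int n * \<bar>of_int Z\<bar> * pi < \<bar>?r\<bar> * pi" by simp
  then show "\<bar>\<psi>n Z n\<bar> < pi" unfolding a using r0 by (simp add: divide_less_eq)
qed

lemma rho_props:
  assumes n: "n \<ge> 2"
  shows "W > 0 \<Longrightarrow> W * of_int n / (W * of_int n - 1) > 1"
    "W < 0 \<Longrightarrow> W * of_int n / (W * of_int n - 1) > 0 \<and> W * of_int n / (W * of_int n - 1) < 1"
proof -
  have N: "(of_int n :: real) \<ge> 2" using n by simp
  assume W: "W > 0"
  have W4': "W \<ge> 4" using W4 W by simp
  have "W * of_int n \<ge> 4 * 2" using W4' N by (intro mult_mono) auto
  then have "W * of_int n > 1" by simp
  then show "W * of_int n / (W * of_int n - 1) > 1" by (simp add: less_divide_eq)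
next
  have N: "(of_int n :: real) \<ge> 2" using n by simp
  assume W: "W < 0"
  then have "W * of_int n < 0" using N by (simp add: mult_neg_pos)
  then show "W * of_int n / (W * of_int n - 1) > 0 \<and> W * of_int n / (W * of_int n - 1) < 1"
    by (simp add: zero_less_divide_iff divide_less_eq)
qed


lemma psi_sin:
  assumes n: "n \<ge> 2" and z: "1 \<le> \<bar>of_int Z :: real\<bar>" "\<bar>of_int Z :: real\<bar> \<le> \<bar>W\<bar> - 1"
  shows "sin (\<psi>n Z n) * sin (\<psi>1 Z) > 0"
proof -
  let ?\<rho> = "W * of_int n / (W * of_int n - 1)"
  have \<rho>: "?\<rho> > 0" using rho_props[OF n] W0 by (cases "W > 0") auto
  have s1: "sin (\<psi>1 Z) * \<psi>1 Z > 0" using psi1_bounds[OF z] by (rule sin_sign)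
  have s2: "sin (\<psi>n Z n) * \<psi>n Z n > 0" using psin_bounds[OF n z] by (rule sin_sign)
  have nz: "\<psi>1 Z \<noteq> 0" using psi1_bounds(1)[OF z] by auto
  have pp: "\<psi>n Z n * \<psi>1 Z > 0"
  proof -
    have "\<psi>n Z n * \<psi>1 Z = (\<psi>1 Z * \<psi>1 Z) * ?\<rho>" unfolding psi_ratio[OF n] by (simp add: algebra_simps)
    moreover have "\<psi>1 Z * \<psi>1 Z > 0" using nz by (metis not_real_square_gt_zero)
    ultimately show ?thesis using \<rho> by (metis mult_pos_pos)
  qed
  have "(sin (\<psi>n Z n) * sin (\<psi>1 Z)) * (\<psi>n Z n * \<psi>1 Z) > 0"
    using mult_pos_pos[OF s2 s1] by (simp add: algebra_simps)
  then show ?thesis using pp by (simp add: zero_less_mult_iff)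
qed

lemma psi_abs:
  assumes n: "n \<ge> 2"
  shows "\<bar>\<psi>n Z n\<bar> = \<bar>\<psi>1 Z\<bar> * (W * of_int n / (W * of_int n - 1))"
proof -
  define \<rho> where "\<rho> = W * of_int n / (W * of_int n - 1)"
  have r: "\<rho> > 0" unfolding \<rho>_def using rho_props[OF n] W0 by (cases "W > 0") auto
  have "\<psi>n Z n = \<psi>1 Z * \<rho>" unfolding \<rho>_def by (rule psi_ratio[OF n])
  then have "\<bar>\<psi>n Z n\<bar> = \<bar>\<psi>1 Z\<bar> * \<bar>\<rho>\<bar>" by (simp only: abs_mult)
  then show ?thesis using r unfolding \<rho>_def[symmetric] by simp
qed

lemma psi_cos:
  assumes n: "n \<ge> 2" and z: "1 \<le> \<bar>of_int Z :: real\<bar>" "\<bar>of_int Z :: real\<bar> \<le> \<bar>W\<bar> - 1"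
  shows "(cos (\<psi>n Z n) - cos (\<psi>1 Z)) * W < 0"
proof -
  define \<rho> where "\<rho> = W * of_int n / (W * of_int n - 1)"
  have a: "\<bar>\<psi>n Z n\<bar> = \<bar>\<psi>1 Z\<bar> * \<rho>" unfolding \<rho>_def by (rule psi_abs[OF n])
  have b1: "0 < \<bar>\<psi>1 Z\<bar>" "\<bar>\<psi>1 Z\<bar> < pi" by (rule psi1_bounds[OF z])+
  have b2: "\<bar>\<psi>n Z n\<bar> < pi" by (rule psin_bounds[OF n z])
  show ?thesis
  proof (cases "W > 0")
    case True
    have r: "\<rho> > 1" unfolding \<rho>_def by (rule rho_props(1)[OF n True])
    have "\<bar>\<psi>1 Z\<bar> * 1 < \<bar>\<psi>1 Z\<bar> * \<rho>" by (rule mult_strict_left_mono) (use r b1 in auto)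
    then have "\<bar>\<psi>1 Z\<bar> < \<bar>\<psi>n Z n\<bar>" using a by linarith
    then have "cos \<bar>\<psi>n Z n\<bar> < cos \<bar>\<psi>1 Z\<bar>" using b2 by (intro cos_monotone_0_pi) auto
    then show ?thesis using True by (simp add: mult_neg_pos)
  next
    case False
    then have Wn: "W < 0" using W0 by simp
    have r: "\<rho> > 0" "\<rho> < 1" using rho_props(2)[OF n Wn] unfolding \<rho>_def by auto
    have "\<bar>\<psi>1 Z\<bar> * \<rho> < \<bar>\<psi>1 Z\<bar> * 1" by (rule mult_strict_left_mono) (use r b1 in auto)
    then have "\<bar>\<psi>n Z n\<bar> < \<bar>\<psi>1 Z\<bar>" using a by linarith
    then have "cos \<bar>\<psi>1 Z\<bar> < cos \<bar>\<psi>n Z n\<bar>" using b1 by (intro cos_monotone_0_pi) auto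
    then show ?thesis using Wn by (simp add: mult_pos_neg)
  qed
qed

lemma psi_inj:
  assumes n: "n \<ge> 2" and m: "m \<ge> 2" and z: "1 \<le> \<bar>of_int Z :: real\<bar>" "\<bar>of_int Z :: real\<bar> \<le> \<bar>W\<bar> - 1"
    and c: "cos (\<psi>n Z n) = cos (\<psi>n Z m)"
  shows "n = m"
proof -
  have c': "cos \<bar>\<psi>n Z n\<bar> = cos \<bar>\<psi>n Z m\<bar>" using c by simp
  have bn: "\<bar>\<psi>n Z n\<bar> \<le> pi" using psin_bounds(2)[OF n z] by simp
  have bm: "\<bar>\<psi>n Z m\<bar> \<le> pi" using psin_bounds(2)[OF m z] by simp
  have e: "\<bar>\<psi>n Z n\<bar> = \<bar>\<psi>n Z m\<bar>" by (rule cos_inj_pi[OF abs_ge_zero bn abs_ge_zero bm c'])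
  define rn where "rn = W * of_int n / (W * of_int n - 1)"
  define rm where "rm = W * of_int m / (W * of_int m - 1)"
  have "\<bar>\<psi>1 Z\<bar> * rn = \<bar>\<psi>1 Z\<bar> * rm"
    using e unfolding rn_def rm_def psi_abs[OF n] psi_abs[OF m] .
  then have "rn = rm" using psi1_bounds(1)[OF z] by simp
  then have "W * of_int n * (W * of_int m - 1) = W * of_int m * (W * of_int n - 1)"
    unfolding rn_def rm_def using r_bound(2)[OF n] r_bound(2)[OF m] by (simp add: field_simps)
  then have "W * of_int n = W * of_int m" by (simp add: algebra_simps) (use W0 in auto)
  then show ?thesis using W0 by simp
qed

end


lemma evf_pres_eq_gen:
  assumes t: "t > 0" and rel: "\<And>r. r \<in> R \<Longrightarrow> evf a1 a2 t r = id" and pe: "pres_eq R u v"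
  shows "evf a1 a2 t u = evf a1 a2 t v"
  using wgrp.ev_pres_eq[OF wgrp_f[OF t] pe] rel unfolding evf_def by blast

context tor
begin

lemma main_tor:
  assumes ng: "\<not> trivial_in (torus_relators p q) g"
  shows "\<exists>N::int. N > 0 \<and> (\<forall>n::int. n \<ge> N \<longrightarrow> \<not> trivial_in (surgery_relators p q n) g)"
proof -
  define Z where "Z = Zc"
  have Zg: "Zgood Z" and KW: "KK Z * W > 0" and z1: "1 \<le> \<bar>of_int Z :: real\<bar>" and z2: "\<bar>of_int Z :: real\<bar> \<le> \<bar>W\<bar> - 1"
    using Zc_props unfolding Z_def by auto
  define A where "A = AA Z"
  define B where "B = BB Z"
  define K where "K = sin A * sin B"
  define \<alpha> where "\<alpha> = sin A * cos B"
  define \<beta> where "\<beta> = cos A * sin B"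
  define G0 where "G0 = 2 * cos A * cos B"
  define v where "v n = 2 * cos (\<psi>n Z n)" for n
  have AB: "A + B = \<psi>1 Z" unfolding A_def B_def by (rule AB_sum)
  have K0: "K \<noteq> 0" using KW unfolding K_def A_def B_def KK_def by auto
  have s1: "\<alpha> + \<beta> = sin (\<psi>1 Z)" unfolding \<alpha>_def \<beta>_def AB[symmetric] by (simp add: sin_add)
  have s1nz: "sin (\<psi>1 Z) \<noteq> 0" using sin_sign[OF psi1_bounds[OF z1 z2]] by auto
  have g1: "G0 - 2 * K = 2 * cos (\<psi>1 Z)" unfolding G0_def K_def AB[symmetric] by (simp add: cos_add)
  have sg: "(v n - (G0 - 2 * K)) * K < 0" if n: "n \<ge> 2" for n
  proof -
    let ?D = "cos (\<psi>n Z n) - cos (\<psi>1 Z)"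
    have d: "?D * W < 0" by (rule psi_cos[OF n z1 z2])
    have kw: "K * W > 0" using KW unfolding K_def A_def B_def KK_def .
    have "(?D * K) * (W * W) = (?D * W) * (K * W)" by (simp add: algebra_simps)
    also have "\<dots> < 0" using d kw by (simp add: mult_neg_pos)
    finally have "(?D * K) * (W * W) < 0" .
    moreover have "W * W > 0" using W0 by (metis not_real_square_gt_zero)
    ultimately have "?D * K < 0" by (simp add: mult_less_0_iff)
    then show ?thesis unfolding v_def g1 by (simp add: algebra_simps)
  qed
  have conv: "\<bar>v n - (G0 - 2 * K)\<bar> \<le> (2 * pi) / of_int n" if n: "n \<ge> 2" for n
  proof -
    have e: "v n - (G0 - 2 * K) = 2 * (cos (\<psi>n Z n) - cos (\<psi>1 Z))" unfolding v_def g1 by simp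
    have "\<bar>v n - (G0 - 2 * K)\<bar> = 2 * \<bar>cos (\<psi>n Z n) - cos (\<psi>1 Z)\<bar>" unfolding e abs_mult by simp
    also have "\<dots> \<le> 2 * \<bar>\<psi>n Z n - \<psi>1 Z\<bar>" using cos_lip by simp
    also have "\<dots> \<le> 2 * (pi / of_int n)" using psi_diff[OF n z2] by simp
    finally show ?thesis by simp
  qed
  obtain N1 where N1: "\<And>n. n \<ge> N1 \<Longrightarrow> \<exists>t. 1 \<le> t \<and> t \<le> 2 \<and> G0 - K * (t + 1 / t) = v n \<and> (\<alpha> / t + \<beta>) * (\<alpha> + \<beta>) > 0"
    using ivt_choice[of K \<alpha> \<beta> 2 v G0 "2 * pi", OF K0 _ sg conv] s1 s1nz by auto
  define P where "P n t \<longleftrightarrow> 1 \<le> t \<and> t \<le> 2 \<and> G0 - K * (t + 1 / t) = v n \<and> (\<alpha> / t + \<beta>) * (\<alpha> + \<beta>) > 0" for n t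
  define tt where "tt n = (SOME t. P n t)" for n
  define N2 where "N2 = max N1 2"
  have ttP: "P n (tt n)" if "n \<ge> N2" for n
    unfolding tt_def by (rule someI_ex) (use N1 that in \<open>auto simp: P_def N2_def\<close>)
  have tt_inj: "inj_on tt {N2..}"
  proof (rule inj_onI)
    fix n m assume nm: "n \<in> {N2..}" "m \<in> {N2..}" "tt n = tt m"
    have "v n = v m" using ttP[of n] ttP[of m] nm by (auto simp: P_def)
    then have "cos (\<psi>n Z n) = cos (\<psi>n Z m)" by (simp add: v_def)
    then show "n = m" using nm by (intro psi_inj[OF _ _ z1 z2]) (auto simp: N2_def)
  qed
  have rep_n: "evf (a1 Z) (a2 Z) (tt n) g = id" if n: "n \<ge> N2" and triv: "trivial_in (surgery_relators p q n) g" for n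
  proof -
    have n2: "n \<ge> 2" using n by (simp add: N2_def)
    have Pn: "P n (tt n)" by (rule ttP[OF n])
    let ?t = "tt n"
    have t: "1 \<le> ?t" "?t \<le> 3" using Pn by (auto simp: P_def)
    have t0: "?t > 0" using t by simp
    have tr: "2 * cos A * cos B - sin A * sin B * (?t + 1 / ?t) = 2 * cos (\<psi>n Z n)"
      using Pn unfolding P_def v_def G0_def K_def by (simp add: algebra_simps)
    have sn: "sin (\<psi>n Z n) * sin (\<psi>1 Z) > 0" by (rule psi_sin[OF n2 z1 z2])
    have snz: "sin (\<psi>n Z n) \<noteq> 0" using sn by auto
    have mm: "(sin A * cos B / ?t + cos A * sin B) * (\<alpha> + \<beta>) > 0" using Pn unfolding P_def \<alpha>_def \<beta>_def by simp
    have sgc: "(sin A * cos B / ?t + cos A * sin B) / sin (\<psi>n Z n) > 0"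
    proof -
      let ?m = "sin A * cos B / ?t + cos A * sin B"
      have "(?m * sin (\<psi>n Z n)) * ((\<alpha> + \<beta>) * (\<alpha> + \<beta>)) = (?m * (\<alpha> + \<beta>)) * (sin (\<psi>n Z n) * sin (\<psi>1 Z))"
        unfolding s1 by (simp add: algebra_simps)
      also have "\<dots> > 0" using mm sn by simp
      finally have "(?m * sin (\<psi>n Z n)) * ((\<alpha> + \<beta>) * (\<alpha> + \<beta>)) > 0" .
      then have "?m * sin (\<psi>n Z n) > 0" by (simp add: zero_less_mult_iff)
      then show ?thesis by (simp add: zero_less_divide_iff zero_less_mult_iff)
    qed
    have near: "\<bar>A + B - \<psi>n Z n\<bar> \<le> pi / 2"
    proof -
      have "\<bar>A + B - \<psi>n Z n\<bar> = \<bar>\<psi>n Z n - \<psi>1 Z\<bar>" unfolding AB by simp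
      also have "\<dots> \<le> pi / of_int n" by (rule psi_diff[OF n2 z2])
      also have "\<dots> \<le> pi / 2" using n2 by (intro divide_left_mono) auto
      finally show ?thesis .
    qed
    have rel: "(of_int p * of_int q * of_int n - 1) * \<psi>n Z n = of_int n * of_int Z * pi" by (rule psi_rel[OF n2])
    have AA': "A = of_int (fst (mcd p q)) * (of_int Z * pi / of_int q)" by (simp add: A_def AA_def cc_def a2_def)
    have BB': "B = of_int (snd (mcd p q)) * (of_int Z * pi / of_int p)" by (simp add: B_def BB_def dd_def a1_def)
    have surg: "evf (a1 Z) (a2 Z) ?t (torus_meridian p q @ word_pow (torus_longitude p q) n) = id"
      using surgery_ok[OF nt t tr[unfolded AA' BB'] sgc[unfolded AA' BB'] snz near[unfolded AA' BB'] rel]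
      unfolding a1_def a2_def .
    interpret R: rep p q Z ?t "a1 Z" "a2 Z"
      by unfold_locales (use t0 p0 q0 in \<open>auto simp: a1_def a2_def\<close>)
    have "evf (a1 Z) (a2 Z) ?t g = evf (a1 Z) (a2 Z) ?t []"
    proof (rule evf_pres_eq_gen[OF t0 _ triv[unfolded trivial_in_def]])
      fix r assume "r \<in> surgery_relators p q n"
      then show "evf (a1 Z) (a2 Z) ?t r = id" using R.evf_torus surg by (auto simp: surgery_relators_def)
    qed
    then show ?thesis using t0 by (simp add: evf_simps)
  qed
  obtain k B' where kB: "valid p q B'" "eqv g (nfw p k B')" using nf_exists by blast
  have notboth: "\<not> (k = 0 \<and> B' = [])"
  proof
    assume "k = 0 \<and> B' = []"
    then have "nfw p k B' = []" by (simp add: nfw_def zpow_def word_pow_def)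
    then show False using kB(2) ng by (simp add: trivial_in_def)
  qed
  have Zn0: "Z \<noteq> 0" using z1 by auto
  have decomp: "evf (a1 Z) (a2 Z) (tt n) g = T (of_int k * (of_int Z * pi)) \<circ> evf (a1 Z) (a2 Z) (tt n) (concat (map blk B'))"
    if n: "n \<ge> N2" for n
  proof -
    have t0: "tt n > 0" using ttP[OF n] by (auto simp: P_def)
    interpret R: rep p q Z "tt n" "a1 Z" "a2 Z"
      by unfold_locales (use t0 p0 q0 in \<open>auto simp: a1_def a2_def\<close>)
    show ?thesis using R.evf_torus_eq[OF kB(2)] R.evf_nfw by simp
  qed
  have blocks_T: "evf (a1 Z) (a2 Z) (tt n) (concat (map blk B')) = T (of_int (- k * Z) * pi)"
    if n: "n \<ge> N2" and triv: "trivial_in (surgery_relators p q n) g" for n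
  proof -
    let ?F = "evf (a1 Z) (a2 Z) (tt n) (concat (map blk B'))"
    let ?x = "of_int k * (of_int Z * pi)"
    have h: "T ?x \<circ> ?F = id"
      using decomp[OF n] rep_n[OF n triv] by simp
    have "?F = (T (- ?x) \<circ> T ?x) \<circ> ?F" unfolding T_add by (simp add: T_0)
    also have "\<dots> = T (- ?x) \<circ> (T ?x \<circ> ?F)" by (simp add: comp_assoc)
    also have "\<dots> = T (- ?x)" unfolding h by simp
    also have "- ?x = of_int (- k * Z) * pi" by (simp add: algebra_simps)
    finally show ?thesis .
  qed
  show ?thesis
  proof (cases "B' = []")
    case True
    then have k0: "k \<noteq> 0" using notboth by simp
    show ?thesis
    proof (intro exI[of _ N2] conjI allI impI)
      show "N2 > 0" by (simp add: N2_def)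
      fix n assume n: "n \<ge> N2"
      show "\<not> trivial_in (surgery_relators p q n) g"
      proof
        assume triv: "trivial_in (surgery_relators p q n) g"
        have t0: "tt n > 0" using ttP[OF n] by (auto simp: P_def)
        have "T (of_int (- k * Z) * pi) = id" using blocks_T[OF n triv] True t0 by (simp add: evf_simps)
        then have "0 + of_int (- k * Z) * pi = 0" unfolding T_def by (metis id_apply)
        then show False using k0 Zn0 by simp
      qed
    qed
  next
    case False
    let ?S = "{t. t > 0 \<and> isscal (evm (a1 Z) (a2 Z) t (concat (map blk B')))}"
    have finS: "finite ?S"
      using finite_scalar_t[OF kB(1) False Zgood_sins(3)[OF Zg] Zgood_sins(4)[OF Zg]] by blast
    have finN: "finite (tt -` ?S \<inter> {N2..})" by (rule finite_vimage_IntI[OF finS tt_inj])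
    obtain N3 where N3: "\<And>n. n \<in> tt -` ?S \<inter> {N2..} \<Longrightarrow> n < N3"
    proof -
      have "bdd_above (tt -` ?S \<inter> {N2..})" using finN by (rule bdd_above_finite)
      then obtain b where "\<And>n. n \<in> tt -` ?S \<inter> {N2..} \<Longrightarrow> n \<le> b" by (auto simp: bdd_above_def)
      then show ?thesis using that[of "b + 1"] by force
    qed
    define N where "N = max N2 N3"
    show ?thesis
    proof (intro exI[of _ N] conjI allI impI)
      show "N > 0" by (simp add: N_def N2_def)
      fix n assume n: "n \<ge> N"
      then have n2: "n \<ge> N2" by (simp add: N_def)
      show "\<not> trivial_in (surgery_relators p q n) g"
      proof
        assume triv: "trivial_in (surgery_relators p q n) g"
        have t0: "tt n > 0" using ttP[OF n2] by (auto simp: P_def)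
        have l: "lifts (evm (a1 Z) (a2 Z) (tt n) (concat (map blk B'))) (T (of_int (- k * Z) * pi))"
          using lifts_ev[OF t0, of "a1 Z" "a2 Z" "concat (map blk B')"] blocks_T[OF n2 triv] by simp
        have "isscal (evm (a1 Z) (a2 Z) (tt n) (concat (map blk B')))" by (rule lift_trans_scalar[OF l])
        then have "n \<in> tt -` ?S \<inter> {N2..}" using t0 n2 by simp
        then have "n < N3" by (rule N3)
        then show False using n by (simp add: N_def)
      qed
    qed
  qed
qed

end

theorem proposition4p6:
  fixes p q :: int and g :: "bool word"
  assumes "nontrivial_torus p q"
    and "\<not> trivial_in (torus_relators p q) g"
  shows "\<exists>N::int. N > 0 \<and> (\<forall>n::int. n \<ge> N \<longrightarrow> \<not> trivial_in (surgery_relators p q n) g)"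
proof -
  interpret tor p q by unfold_locales (rule assms(1))
  show ?thesis by (rule main_tor[OF assms(2)])
qed


end
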